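(* Let $O_D$ be a unitary on $r=\log_2 m+a$ qubits with $O_D|0^r\rangle=\sum_{x\in[m]}\alpha_x|x\rangle|\xi_x\rangle$, and let $p_x=|\alpha_x|^2$ denote the probability of outcome $x$. Let $\tau$ be a threshold and $\epsilon\in(0,1]$ an accuracy parameter, and let $l=\lceil\log_2(1/\epsilon)\rceil+8$. Then there is a quantum circuit \textsc{ProbFilBOrcl} making $O(1/\epsilon)$ calls to $O_D$ such that, for every $x\in[m]$, upon measuring the output $\textsc{ProbFilBOrcl}\,|x\rangle|0^{2l+r+1}\rangle|0\rangle$ one observes, with probability at least $8/\pi^2$, a state of the form $|x\rangle|\phi_x\rangle|0\rangle$ if $p_x<\tau-\epsilon$, and of the form $|x\rangle|\phi_x\rangle|1\rangle$ if $p_x\ge\tau$.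
   Context: $O_D$ is an oracle preparing a superposition over outcomes $x\in[m]$ (with $a$ additional workspace qubits, $|\xi_x\rangle$ normalized states on them), so that measuring the first register yields $x$ with probability $p_x$. $|\phi_x\rangle$ denotes some state of the ancilla registers. Query complexity counts calls to $O_D$ (possibly controlled or inverted). *)

theory Defs
  imports Complex_Main "Jordan_Normal_Form.Matrix"
begin

definition adj :: "complex mat \<Rightarrow> complex mat" where
  "adj U = mat (dim_col U) (dim_row U) (\<lambda>(i,j). cnj (U $$ (j,i)))"

definition is_unitary :: "nat \<Rightarrow> complex mat \<Rightarrow> bool" where
  "is_unitary N U \<longleftrightarrow> U \<in> carrier_mat N N \<and> adj U * U = 1\<^sub>m N \<and> U * adj U = 1\<^sub>m N"

text \<open>A circuit acts on a space of dimension N (a register of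
qubits, basis states = indices < N). A step is either a fixed unitary (independent of
the oracle) or a call to the oracle Orc (of dimension d) or to its inverse, acting as
  I_{N - d k} (+) (U (x) I_k),
i.e. a (possibly controlled) application of Orc or Orc^dagger on a subsystem. Together with
the free fixed unitaries (qubit permutations etc.) this covers controlled/inverted calls
placed on arbitrary qubits.\<close>
datatype step = Fixed "complex mat" | Query bool nat

definition query_op :: "nat \<Rightarrow> complex mat \<Rightarrow> bool \<Rightarrow> nat \<Rightarrow> complex mat" where
  "query_op N Orc dag k =
     (let d = dim_row Orc; U = (if dag then adj Orc else Orc); s = N - d * k in
      mat N N (\<lambda>(i,j).
        if i < s \<or> j < s then (if i = j then 1 else 0)
        else if (i - s) mod k = (j - s) mod k then U $$ ((i - s) div k, (j - s) div k)
        else 0))"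

fun step_op :: "nat \<Rightarrow> complex mat \<Rightarrow> step \<Rightarrow> complex mat" where
  "step_op N Orc (Fixed V) = V"
| "step_op N Orc (Query dag k) = query_op N Orc dag k"

fun step_ok :: "nat \<Rightarrow> nat \<Rightarrow> step \<Rightarrow> bool" where
  "step_ok N d (Fixed V) = is_unitary N V"
| "step_ok N d (Query dag k) = (0 < k \<and> d * k \<le> N)"

fun run_circ :: "nat \<Rightarrow> complex mat \<Rightarrow> step list \<Rightarrow> complex vec \<Rightarrow> complex vec" where
  "run_circ N Orc [] v = v"
| "run_circ N Orc (s # ss) v = run_circ N Orc ss (step_op N Orc s *\<^sub>v v)"

fun is_query :: "step \<Rightarrow> bool" where
  "is_query (Fixed _) = False"
| "is_query (Query _ _) = True"

definition num_queries :: "step list \<Rightarrow> nat" where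
  "num_queries C = length (filter is_query C)"

text \<open>Outcome probability p_x of an oracle Orc on r = n0 + a qubits:
Orc |0^r> = sum_x alpha_x |x>|xi_x>, basis index of |x>|y> is x * 2^a + y,
so p_x = |alpha_x|^2 = sum_y |<x,y| Orc |0>|^2.\<close>
definition outcome_prob :: "nat \<Rightarrow> complex mat \<Rightarrow> nat \<Rightarrow> real" where
  "outcome_prob a Orc x = (\<Sum>y<2^a. (cmod (Orc $$ (x * 2^a + y, 0)))\<^sup>2)"

text \<open>Probability that measuring state v (over N = m * W * 2 basis states laid out as
|x>|w>|b>, index x * (2 W) + 2 w + b) yields first register x and last qubit b.\<close>
definition meas_prob :: "nat \<Rightarrow> complex vec \<Rightarrow> nat \<Rightarrow> nat \<Rightarrow> real" where
  "meas_prob W v x b = (\<Sum>w<W. (cmod (v $ (x * (2 * W) + 2 * w + b)))\<^sup>2)"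

end

theory Submission
  imports Defs "Jordan_Normal_Form.Determinant"
begin


lemma unitary_of_right:
  fixes f :: "nat \<times> nat \<Rightarrow> complex"
  assumes h: "\<And>i j. i < N \<Longrightarrow> j < N \<Longrightarrow> (\<Sum>l<N. f (i,l) * cnj (f (j,l))) = (if i = j then 1 else 0)"
  shows "is_unitary N (mat N N f)"
proof -
  let ?A = "mat N N f"
  have c1: "?A \<in> carrier_mat N N" by simp
  have c2: "adj ?A \<in> carrier_mat N N" by (simp add: adj_def)
  have "?A * adj ?A = 1\<^sub>m N"
  proof (rule eq_matI)
    fix i j assume i: "i < dim_row (1\<^sub>m N)" and j: "j < dim_col (1\<^sub>m N)"
    hence i': "i < N" and j': "j < N" by auto
    have "(?A * adj ?A) $$ (i,j) = row ?A i \<bullet> col (adj ?A) j"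
      using i' j' by (simp add: adj_def)
    also have "\<dots> = (\<Sum>l<N. f (i,l) * cnj (f (j,l)))"
      unfolding scalar_prod_def using i' j' by (simp add: adj_def lessThan_atLeast0)
    also have "\<dots> = 1\<^sub>m N $$ (i,j)" using h[OF i' j'] i' j' by simp
    finally show "(?A * adj ?A) $$ (i,j) = 1\<^sub>m N $$ (i,j)" .
  qed (auto simp: adj_def)
  moreover from mat_mult_left_right_inverse[OF c1 c2 this] have "adj ?A * ?A = 1\<^sub>m N" .
  ultimately show ?thesis unfolding is_unitary_def by simp
qed

lemma mat_vec_index:
  assumes "i < N" "dim_vec v = N"
  shows "(mat N N f *\<^sub>v v) $ i = (\<Sum>l<N. f (i,l) * v $ l)"
  using assms by (simp add: scalar_prod_def lessThan_atLeast0)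


lemma adj_carrier[simp]: "adj A \<in> carrier_mat (dim_col A) (dim_row A)"
  by (simp add: adj_def)

lemma adj_adj: "A \<in> carrier_mat N N \<Longrightarrow> adj (adj A) = A"
  by (auto simp: adj_def intro!: eq_matI)

lemma unitary_adj: assumes "is_unitary N A" shows "is_unitary N (adj A)"
proof -
  have c: "A \<in> carrier_mat N N" using assms is_unitary_def by auto
  have c2: "adj A \<in> carrier_mat N N" using c by (simp add: adj_def)
  show ?thesis using assms c2 adj_adj[OF c] unfolding is_unitary_def by simp
qed

lemma unitary_rows:
  assumes "is_unitary N A" "i < N" "j < N"
  shows "(\<Sum>l<N. A $$ (i,l) * cnj (A $$ (j,l))) = (if i = j then 1 else 0)"
proof -
  have c: "A \<in> carrier_mat N N" and e: "A * adj A = 1\<^sub>m N" using assms(1) is_unitary_def by auto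
  have "(A * adj A) $$ (i,j) = (\<Sum>l<N. A $$ (i,l) * cnj (A $$ (j,l)))"
    using c assms(2,3) by (simp add: adj_def scalar_prod_def lessThan_atLeast0)
  then show ?thesis using e assms(2,3) by simp
qed

lemma unitary_cols:
  assumes "is_unitary N A" "i < N" "j < N"
  shows "(\<Sum>l<N. cnj (A $$ (l,i)) * A $$ (l,j)) = (if i = j then 1 else 0)"
proof -
  have c: "A \<in> carrier_mat N N" and e: "adj A * A = 1\<^sub>m N" using assms(1) is_unitary_def by auto
  have "(adj A * A) $$ (i,j) = (\<Sum>l<N. cnj (A $$ (l,i)) * A $$ (l,j))"
    using c assms(2,3) by (simp add: adj_def scalar_prod_def lessThan_atLeast0)
  then show ?thesis using e assms(2,3) by simp
qed

definition pmat :: "nat \<Rightarrow> (nat \<Rightarrow> nat) \<Rightarrow> complex mat" where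
  "pmat N f = mat N N (\<lambda>(i,j). if j = f i then 1 else 0)"

lemma pmat_unitary:
  assumes "\<And>i. i < N \<Longrightarrow> f i < N" "inj_on f {..<N}"
  shows "is_unitary N (pmat N f)"
  unfolding pmat_def
proof (rule unitary_of_right)
  fix i j assume i: "i < N" and j: "j < N"
  have "(\<Sum>l<N. (case (i, l) of (i, j) \<Rightarrow> if j = f i then 1 else 0) *
          cnj (case (j, l) of (i, j) \<Rightarrow> if j = f i then 1 else (0::complex)))
      = (\<Sum>l<N. if l = f i then (if f i = f j then 1 else 0) else 0)"
    by (rule sum.cong) auto
  also have "\<dots> = (if f i = f j then 1 else 0)" using assms(1)[OF i] by simp
  also have "\<dots> = (if i = j then 1 else 0)" using assms(2) i j by (auto dest: inj_onD)
  finally show "(\<Sum>l<N. (case (i, l) of (i, j) \<Rightarrow> if j = f i then 1 else 0) *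
          cnj (case (j, l) of (i, j) \<Rightarrow> if j = f i then 1 else (0::complex))) = (if i = j then 1 else 0)" .
qed

lemma pmat_mult:
  assumes "\<And>i. i < N \<Longrightarrow> f i < N" "dim_vec v = N"
  shows "pmat N f *\<^sub>v v = vec N (\<lambda>i. v $ f i)"
proof (rule eq_vecI)
  fix i assume "i < dim_vec (vec N (\<lambda>i. v $ f i))"
  hence i: "i < N" by simp
  have "(pmat N f *\<^sub>v v) $ i = (\<Sum>l<N. (if l = f i then 1 else 0) * v $ l)"
    unfolding pmat_def using i assms by (simp add: scalar_prod_def lessThan_atLeast0)
  also have "\<dots> = (\<Sum>l<N. if l = f i then v $ l else 0)" by (rule sum.cong) auto
  also have "\<dots> = v $ f i" using assms(1)[OF i] by simp
  finally show "(pmat N f *\<^sub>v v) $ i = vec N (\<lambda>i. v $ f i) $ i" using i by simp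
qed (simp add: pmat_def)

lemma adj_pmat_mult:
  assumes "\<And>i. i < N \<Longrightarrow> f i < N" "inj_on f {..<N}" "dim_vec v = N" "i0 < N"
  shows "(adj (pmat N f) *\<^sub>v v) $ (f i0) = v $ i0"
proof -
  have fi: "f i0 < N" using assms by auto
  have "(adj (pmat N f) *\<^sub>v v) $ (f i0) = (\<Sum>l<N. (if f i0 = f l then 1 else 0) * v $ l)"
    unfolding adj_def pmat_def using fi assms by (auto simp: scalar_prod_def lessThan_atLeast0 intro!: sum.cong)
  also have "\<dots> = (\<Sum>l<N. if l = i0 then v $ l else 0)"
    by (rule sum.cong) (use assms(2,4) in \<open>auto dest: inj_onD\<close>)
  also have "\<dots> = v $ i0" using assms(4) by simp
  finally show ?thesis .
qed

definition dmat :: "nat \<Rightarrow> (nat \<Rightarrow> complex) \<Rightarrow> complex mat" where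
  "dmat N g = mat N N (\<lambda>(i,j). if i = j then g i else 0)"

lemma dmat_unitary:
  assumes "\<And>i. i < N \<Longrightarrow> g i * cnj (g i) = 1"
  shows "is_unitary N (dmat N g)"
  unfolding dmat_def
proof (rule unitary_of_right)
  fix i j assume i: "i < N" and j: "j < N"
  have "(\<Sum>l<N. (case (i, l) of (i, j) \<Rightarrow> if i = j then g i else 0) *
          cnj (case (j, l) of (i, j) \<Rightarrow> if i = j then g i else 0))
      = (\<Sum>l<N. if l = i then (if i = j then g i * cnj (g i) else 0) else 0)"
    by (rule sum.cong) auto
  also have "\<dots> = (if i = j then 1 else 0)" using i assms by auto
  finally show "(\<Sum>l<N. (case (i, l) of (i, j) \<Rightarrow> if i = j then g i else 0) *
          cnj (case (j, l) of (i, j) \<Rightarrow> if i = j then g i else 0)) = (if i = j then 1 else 0)" .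
qed

lemma dmat_mult:
  assumes "dim_vec v = N"
  shows "dmat N g *\<^sub>v v = vec N (\<lambda>i. g i * v $ i)"
proof (rule eq_vecI)
  fix i assume "i < dim_vec (vec N (\<lambda>i. g i * v $ i))"
  hence i: "i < N" by simp
  have "(dmat N g *\<^sub>v v) $ i = (\<Sum>l<N. (if i = l then g i else 0) * v $ l)"
    unfolding dmat_def using i assms by (simp add: scalar_prod_def lessThan_atLeast0)
  also have "\<dots> = (\<Sum>l<N. if l = i then g i * v $ l else 0)" by (rule sum.cong) auto
  also have "\<dots> = g i * v $ i" using i by simp
  finally show "(dmat N g *\<^sub>v v) $ i = vec N (\<lambda>i. g i * v $ i) $ i" using i by simp
qed (simp add: dmat_def)

lemma mr_lt: "b < (B::nat) \<Longrightarrow> a < A \<Longrightarrow> a * B + b < A * B"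
proof -
  assume "b < B" "a < A"
  hence "a * B + b < (a + 1) * B" by simp
  also have "\<dots> \<le> A * B" using \<open>a < A\<close> by (intro mult_right_mono) auto
  finally show ?thesis .
qed

lemma mr_div[simp]: "b < (B::nat) \<Longrightarrow> (a * B + b) div B = a"
  by simp
lemma mr_mod[simp]: "b < (B::nat) \<Longrightarrow> (a * B + b) mod B = b"
  by simp

lemma sum_block:
  fixes g :: "nat \<Rightarrow> 'b::comm_monoid_add"
  assumes "h < A"
  shows "(\<Sum>l<A*M. if l div M = h then g l else 0) = (\<Sum>c<M. g (h*M + c))"
proof -
  have "(\<Sum>l<A*M. if l div M = h then g l else 0) = (\<Sum>l\<in>{..<A*M} \<inter> {l. l div M = h}. g l)"
    by (simp add: sum.If_cases)
  also have "{..<A*M} \<inter> {l. l div M = h} = (\<lambda>c. h*M + c) ` {..<M}"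
  proof (intro equalityI subsetI)
    fix l assume l: "l \<in> {..<A*M} \<inter> {l. l div M = h}"
    have M0: "M > 0" using l by (cases "M = 0") auto
    have "l = h * M + l mod M" using l by (metis Int_iff div_mult_mod_eq mem_Collect_eq)
    moreover have "l mod M < M" using M0 by simp
    ultimately have "l = h * M + l mod M \<and> l mod M < M" by blast
    thus "l \<in> (\<lambda>c. h*M + c) ` {..<M}" by blast
  next
    fix l assume "l \<in> (\<lambda>c. h*M + c) ` {..<M}"
    then obtain c where "c < M" "l = h*M + c" by auto
    thus "l \<in> {..<A*M} \<inter> {l. l div M = h}" using mr_lt[of c M h A] assms by auto
  qed
  also have "(\<Sum>l\<in>(\<lambda>c. h*M + c) ` {..<M}. g l) = (\<Sum>c<M. g (h*M + c))"
    by (rule sum.reindex_cong[where l="\<lambda>c. h*M+c"]) (auto simp: inj_on_def)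
  finally show ?thesis .
qed

lemma sum_stride:
  fixes g :: "nat \<Rightarrow> 'b::comm_monoid_add"
  assumes "t < k"
  shows "(\<Sum>l<d*k. if l mod k = t then g l else 0) = (\<Sum>u<d. g (u*k + t))"
proof -
  have "(\<Sum>l<d*k. if l mod k = t then g l else 0) = (\<Sum>l\<in>{..<d*k} \<inter> {l. l mod k = t}. g l)"
    by (simp add: sum.If_cases)
  also have "{..<d*k} \<inter> {l. l mod k = t} = (\<lambda>u. u*k + t) ` {..<d}"
  proof (intro equalityI subsetI)
    fix l assume l: "l \<in> {..<d*k} \<inter> {l. l mod k = t}"
    hence "l = (l div k) * k + t" by (metis Int_iff div_mult_mod_eq mem_Collect_eq)
    moreover have "l div k < d" using l by (auto simp: less_mult_imp_div_less)
    ultimately show "l \<in> (\<lambda>u. u*k + t) ` {..<d}" by blast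
  next
    fix l assume "l \<in> (\<lambda>u. u*k + t) ` {..<d}"
    then obtain u where "u < d" "l = u*k + t" by auto
    thus "l \<in> {..<d*k} \<inter> {l. l mod k = t}" using mr_lt[of t k u d] assms by auto
  qed
  also have "(\<Sum>l\<in>(\<lambda>u. u*k + t) ` {..<d}. g l) = (\<Sum>u<d. g (u*k + t))"
    by (rule sum.reindex_cong[where l="\<lambda>u. u*k+t"]) (use assms in \<open>auto simp: inj_on_def\<close>)
  finally show ?thesis .
qed

definition bmat :: "nat \<Rightarrow> nat \<Rightarrow> complex mat \<Rightarrow> complex mat" where
  "bmat N M U = mat N N (\<lambda>(i,j). if i div M = j div M then U $$ (i mod M, j mod M) else 0)"

lemma bmat_unitary:
  assumes "is_unitary M U" "N = A * M"
  shows "is_unitary N (bmat N M U)"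
  unfolding bmat_def
proof (rule unitary_of_right)
  fix i j assume i: "i < N" and j: "j < N"
  have M0: "0 < M" using i assms(2) by (cases "M = 0") auto
  have hi: "i div M < A" using i assms(2) by (simp add: less_mult_imp_div_less)
  show "(\<Sum>l<N. (case (i, l) of (i, j) \<Rightarrow> if i div M = j div M then U $$ (i mod M, j mod M) else 0) *
          cnj (case (j, l) of (i, j) \<Rightarrow> if i div M = j div M then U $$ (i mod M, j mod M) else 0))
        = (if i = j then 1 else 0)"
  proof (cases "i div M = j div M")
    case True
    have "(\<Sum>l<N. (case (i, l) of (i, j) \<Rightarrow> if i div M = j div M then U $$ (i mod M, j mod M) else 0) *
          cnj (case (j, l) of (i, j) \<Rightarrow> if i div M = j div M then U $$ (i mod M, j mod M) else 0))
        = (\<Sum>l<A*M. if l div M = i div M then U $$ (i mod M, l mod M) * cnj (U $$ (j mod M, l mod M)) else 0)"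
      using True assms(2) by (intro sum.cong) auto
    also have "\<dots> = (\<Sum>c<M. (\<lambda>l. U $$ (i mod M, l mod M) * cnj (U $$ (j mod M, l mod M))) (i div M * M + c))"
      by (rule sum_block[OF hi])
    also have "\<dots> = (\<Sum>c<M. U $$ (i mod M, c) * cnj (U $$ (j mod M, c)))"
      by (rule sum.cong) auto
    also have "\<dots> = (if i mod M = j mod M then 1 else 0)"
      using unitary_rows[OF assms(1)] M0 by simp
    also have "\<dots> = (if i = j then 1 else 0)" using True
      by (metis div_mult_mod_eq)
    finally show ?thesis .
  next
    case False
    have "(\<Sum>l<N. (case (i, l) of (i, j) \<Rightarrow> if i div M = j div M then U $$ (i mod M, j mod M) else 0) *
          cnj (case (j, l) of (i, j) \<Rightarrow> if i div M = j div M then U $$ (i mod M, j mod M) else 0)) = 0"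
      using False by (intro sum.neutral) auto
    thus ?thesis using False by auto
  qed
qed

lemma bmat_mult:
  assumes "dim_vec v = N" "N = A * M" "i < N"
  shows "(bmat N M U *\<^sub>v v) $ i = (\<Sum>c<M. U $$ (i mod M, c) * v $ ((i div M) * M + c))"
proof -
  have hi: "i div M < A" using assms by (simp add: less_mult_imp_div_less)
  have "(bmat N M U *\<^sub>v v) $ i = (\<Sum>l<N. (if i div M = l div M then U $$ (i mod M, l mod M) else 0) * v $ l)"
    unfolding bmat_def using assms by (simp add: scalar_prod_def lessThan_atLeast0)
  also have "\<dots> = (\<Sum>l<A*M. if l div M = i div M then U $$ (i mod M, l mod M) * v $ l else 0)"
    using assms(2) by (intro sum.cong) auto
  also have "\<dots> = (\<Sum>c<M. (\<lambda>l. U $$ (i mod M, l mod M) * v $ l) (i div M * M + c))"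
    by (rule sum_block[OF hi])
  also have "\<dots> = (\<Sum>c<M. U $$ (i mod M, c) * v $ ((i div M) * M + c))"
    by (rule sum.cong) auto
  finally show ?thesis .
qed

lemma query_mult:
  assumes "is_unitary d Orc" "N = d * k" "0 < k" "dim_vec v = N" "i < N"
  shows "(query_op N Orc dag k *\<^sub>v v) $ i =
     (\<Sum>u<d. (if dag then adj Orc else Orc) $$ (i div k, u) * v $ (u * k + i mod k))"
proof -
  have dr: "dim_row Orc = d" using assms(1) unfolding is_unitary_def by auto
  let ?U = "if dag then adj Orc else Orc"
  have s0: "N - d * k = 0" using assms(2) by simp
  have "(query_op N Orc dag k *\<^sub>v v) $ i = (\<Sum>l<N. (if i mod k = l mod k then ?U $$ (i div k, l div k) else 0) * v $ l)"
    unfolding query_op_def Let_def dr s0 using assms by (auto simp: scalar_prod_def lessThan_atLeast0 intro!: sum.cong)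
  also have "\<dots> = (\<Sum>l<d*k. if l mod k = i mod k then ?U $$ (i div k, l div k) * v $ l else 0)"
    using assms(2) by (intro sum.cong) auto
  also have "\<dots> = (\<Sum>u<d. (\<lambda>l. ?U $$ (i div k, l div k) * v $ l) (u * k + i mod k))"
    by (rule sum_stride) (use assms(3) in simp)
  also have "\<dots> = (\<Sum>u<d. ?U $$ (i div k, u) * v $ (u * k + i mod k))"
    by (rule sum.cong) (use assms(3) in auto)
  finally show ?thesis .
qed

lemma query_dim[simp]: "dim_vec (query_op N Orc dag k *\<^sub>v v) = N"
  by (simp add: query_op_def Let_def)
lemma dmat_dim[simp]: "dim_vec (dmat N g *\<^sub>v v) = N" by (simp add: dmat_def)
lemma pmat_dim[simp]: "dim_vec (pmat N g *\<^sub>v v) = N" by (simp add: pmat_def)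
lemma bmat_dim[simp]: "dim_vec (bmat N M U *\<^sub>v v) = N" by (simp add: bmat_def)
lemma adj_pmat_dim[simp]: "dim_vec (adj (pmat N g) *\<^sub>v v) = N" by (simp add: pmat_def adj_def)


lemma cis_minus_one_sq: "(cmod (cis b - 1))\<^sup>2 = 4 * (sin (b/2))\<^sup>2"
proof -
  have "(cmod (cis b - 1))\<^sup>2 = (cos b - 1)\<^sup>2 + (sin b)\<^sup>2" by (simp add: cmod_power2)
  also have "\<dots> = 2 - 2 * cos b" by (simp add: power2_eq_square algebra_simps sin_squared_eq)
  also have "cos b = 1 - 2 * (sin (b/2))\<^sup>2" using cos_double_sin[of "b/2"] by simp
  finally show ?thesis by simp
qed

lemma geom_cis:
  "(cmod (\<Sum>c<M. cis (real c * a)))\<^sup>2 * (sin (a/2))\<^sup>2 = (sin (real M * a / 2))\<^sup>2"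
proof -
  have e: "(\<Sum>c<M. cis (real c * a)) = (\<Sum>c<M. (cis a)^c)" by (simp add: DeMoivre)
  have "1 - (cis a)^M = (1 - cis a) * (\<Sum>c<M. (cis a)^c)" by (rule one_diff_power_eq)
  hence "cmod (1 - (cis a)^M) = cmod (1 - cis a) * cmod (\<Sum>c<M. (cis a)^c)" by (simp add: norm_mult)
  hence "(cmod ((cis a)^M - 1))\<^sup>2 = (cmod (cis a - 1))\<^sup>2 * (cmod (\<Sum>c<M. (cis a)^c))\<^sup>2"
    by (simp add: norm_minus_commute power_mult_distrib)
  hence "(cmod (cis (real M * a) - 1))\<^sup>2 = (cmod (cis a - 1))\<^sup>2 * (cmod (\<Sum>c<M. (cis a)^c))\<^sup>2"
    by (simp add: DeMoivre)
  hence "4 * (sin (real M * a / 2))\<^sup>2 = 4 * (sin (a/2))\<^sup>2 * (cmod (\<Sum>c<M. (cis a)^c))\<^sup>2"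
    by (simp add: cis_minus_one_sq)
  thus ?thesis using e by simp
qed

lemma geom_cis_zero:
  assumes "sin (real M * a / 2) = 0" "sin (a/2) \<noteq> 0"
  shows "(\<Sum>c<M. cis (real c * a)) = 0"
  using geom_cis[where M=M and a=a] assms by simp

lemma qft_term:
  assumes M: "0 < M"
  shows "cis (sg * 2 * pi * real i * real l / real M) / complex_of_real (sqrt (real M)) *
          cnj (cis (sg * 2 * pi * real j * real l / real M) / complex_of_real (sqrt (real M)))
        = cis (real l * (sg * 2 * pi * (real i - real j) / real M)) / of_nat M"
proof -
  have sq: "complex_of_real (sqrt (real M)) * complex_of_real (sqrt (real M)) = of_nat M"
  proof -
    have "complex_of_real (sqrt (real M)) * complex_of_real (sqrt (real M)) = complex_of_real (sqrt (real M) * sqrt (real M))"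
      by (simp only: of_real_mult)
    also have "sqrt (real M) * sqrt (real M) = real M" by simp
    finally show ?thesis by simp
  qed
  have c: "cis (sg * 2 * pi * real i * real l / real M) * cnj (cis (sg * 2 * pi * real j * real l / real M))
        = cis (real l * (sg * 2 * pi * (real i - real j) / real M))"
  proof -
    have "cis (sg * 2 * pi * real i * real l / real M) * cnj (cis (sg * 2 * pi * real j * real l / real M))
       = cis (sg * 2 * pi * real i * real l / real M + - (sg * 2 * pi * real j * real l / real M))"
      by (simp add: cis_cnj cis_mult)
    also have "sg * 2 * pi * real i * real l / real M + - (sg * 2 * pi * real j * real l / real M)
       = real l * (sg * 2 * pi * (real i - real j) / real M)"
      by (simp add: algebra_simps diff_divide_distrib)
    finally show ?thesis .
  qed
  have "cnj (complex_of_real (sqrt (real M))) = complex_of_real (sqrt (real M))" by simp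
  hence "cis (sg * 2 * pi * real i * real l / real M) / complex_of_real (sqrt (real M)) *
          cnj (cis (sg * 2 * pi * real j * real l / real M) / complex_of_real (sqrt (real M)))
     = (cis (sg * 2 * pi * real i * real l / real M) * cnj (cis (sg * 2 * pi * real j * real l / real M)))
        / (complex_of_real (sqrt (real M)) * complex_of_real (sqrt (real M)))"
    by (simp add: complex_cnj_divide)
  also have "\<dots> = cis (real l * (sg * 2 * pi * (real i - real j) / real M)) / of_nat M"
    using c sq by simp
  finally show ?thesis .
qed


lemma qft_orth:
  assumes sg: "sg = 1 \<or> sg = -1" and M: "0 < M" and i: "i < M" and j: "j < M"
  shows "(\<Sum>l<M. cis (real l * (sg * 2 * pi * (real i - real j) / real M)) / of_nat M) = (if i = j then 1 else 0)"
proof (cases "i = j")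
  case True thus ?thesis using M by simp
next
  case False
  let ?a = "sg * 2 * pi * (real i - real j) / real M"
  have e1: "real M * ?a / 2 = (sg * (real i - real j)) * pi" using M by simp
  have s1: "sin (real M * ?a / 2) = 0"
  proof -
    have "sg * (real i - real j) \<in> \<int>" using sg by auto
    thus ?thesis unfolding e1 by (simp add: sin_times_pi_eq_0)
  qed
  have s2: "sin (?a / 2) \<noteq> 0"
  proof
    assume "sin (?a / 2) = 0"
    moreover have "?a / 2 = (sg * (real i - real j) / real M) * pi" by simp
    ultimately have "sg * (real i - real j) / real M \<in> \<int>" using sin_times_pi_eq_0 by metis
    then obtain z where z: "sg * (real i - real j) / real M = of_int z" by (auto elim: Ints_cases)
    have "\<bar>real i - real j\<bar> < real M" using i j by linarith
    hence lt: "\<bar>sg * (real i - real j)\<bar> < real M" using sg by (auto simp: abs_mult)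
    have "sg * (real i - real j) = of_int z * real M" using z M by (simp add: divide_eq_eq)
    hence "\<bar>of_int z\<bar> * real M < real M" using lt by (simp add: abs_mult)
    hence "\<bar>real_of_int z\<bar> < 1" using M by simp
    hence "z = 0" by linarith
    hence "sg * (real i - real j) = 0" using z M by simp
    hence "real i = real j" using sg by auto
    thus False using False by simp
  qed
  have "(\<Sum>l<M. cis (real l * ?a)) = 0" by (rule geom_cis_zero[OF s1 s2])
  thus ?thesis using False by (simp add: sum_divide_distrib[symmetric])
qed


definition qft :: "nat \<Rightarrow> real \<Rightarrow> complex mat" where
  "qft M sg = mat M M (\<lambda>(y,c). cis (sg * 2 * pi * real y * real c / real M) / complex_of_real (sqrt (real M)))"

lemma qft_unitary:
  assumes sg: "sg = 1 \<or> sg = -1" and M: "0 < M"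
  shows "is_unitary M (qft M sg)"
  unfolding qft_def
proof (rule unitary_of_right)
  fix i j assume i: "i < M" and j: "j < M"
  have "(\<Sum>l<M. (case (i, l) of (y, c) \<Rightarrow> cis (sg * 2 * pi * real y * real c / real M) / complex_of_real (sqrt (real M))) *
           cnj (case (j, l) of (y, c) \<Rightarrow> cis (sg * 2 * pi * real y * real c / real M) / complex_of_real (sqrt (real M))))
      = (\<Sum>l<M. cis (real l * (sg * 2 * pi * (real i - real j) / real M)) / of_nat M)"
    by (rule sum.cong) (simp_all only: prod.case qft_term[OF M])
  also have "\<dots> = (if i = j then 1 else 0)" by (rule qft_orth[OF sg M i j])
  finally show "(\<Sum>l<M. (case (i, l) of (y, c) \<Rightarrow> cis (sg * 2 * pi * real y * real c / real M) / complex_of_real (sqrt (real M))) *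
           cnj (case (j, l) of (y, c) \<Rightarrow> cis (sg * 2 * pi * real y * real c / real M) / complex_of_real (sqrt (real M))))
      = (if i = j then 1 else 0)" .
qed


lemma cos_bound: "\<bar>cos x - (\<Sum>m<n. cos_coeff m * x ^ m)\<bar> \<le> \<bar>x\<bar> ^ n / fact n"
proof -
  obtain t where "cos x = (\<Sum>m<n. cos_coeff m * x ^ m) + (cos(t + 1/2 * real n * pi) / fact n) * x ^ n"
    using Maclaurin_cos_expansion by blast
  hence "\<bar>cos x - (\<Sum>m<n. cos_coeff m * x ^ m)\<bar> = \<bar>cos(t + 1/2 * real n * pi)\<bar> / fact n * \<bar>x\<bar> ^ n"
    by (simp add: abs_mult power_abs)
  also have "\<dots> \<le> 1 / fact n * \<bar>x\<bar> ^ n"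
    by (intro mult_right_mono divide_right_mono) auto
  finally show ?thesis by simp
qed

lemma cos157: "cos (157/100::real) > 0"
proof -
  have "\<bar>cos (157/100::real) - (\<Sum>m<10. cos_coeff m * (157/100) ^ m)\<bar> \<le> \<bar>157/100\<bar> ^ 10 / fact 10"
    by (rule cos_bound)
  hence "\<bar>cos (157/100::real) - 331002736961946401 / 403200000000000000000\<bar> \<le> 9099059901039401398249 / 362880000000000000000000000"
    by (simp add: cos_coeff_def lessThan_nat_numeral fact_numeral power_divide)
  thus ?thesis unfolding abs_le_iff by linarith
qed

lemma cos1575: "cos (1575/1000::real) < 0"
proof -
  have "\<bar>cos (1575/1000::real) - (\<Sum>m<10. cos_coeff m * (1575/1000) ^ m)\<bar> \<le> \<bar>1575/1000\<bar> ^ 10 / fact 10"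
    by (rule cos_bound)
  hence "\<bar>cos (1575/1000::real) + 17524876013633 / 4194304000000000\<bar> \<le> 1737090461872647 / 67108864000000000000"
    by (simp add: cos_coeff_def lessThan_nat_numeral fact_numeral power_divide)
  thus ?thesis unfolding abs_le_iff by linarith
qed

lemma pi_lb: "314/100 < pi"
proof (rule ccontr)
  assume "\<not> 314/100 < pi"
  hence "pi/2 \<le> 157/100" by simp
  moreover have "157/100 \<le> pi" using pi_ge_two by simp
  ultimately have "cos (157/100) \<le> cos (pi/2)"
    by (intro cos_monotone_0_pi_le) auto
  thus False using cos157 by simp
qed

lemma pi_ub: "pi < 315/100"
proof (rule ccontr)
  assume "\<not> pi < 315/100"
  hence "1575/1000 \<le> pi/2" by simp
  hence "0 \<le> cos (1575/1000::real)" by (intro cos_ge_zero) auto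
  thus False using cos1575 by simp
qed


lemma sin_lower: "sin (x::real) \<ge> x - x^3/6 + x^5/120 - x^7/5040 - \<bar>x\<bar>^9/362880"
proof -
  have "\<bar>sin x - (\<Sum>m<9. sin_coeff m * x ^ m)\<bar> \<le> inverse (fact 9) * \<bar>x\<bar> ^ 9"
    by (rule Maclaurin_sin_bound)
  hence "\<bar>sin x - (x - x^3/6 + x^5/120 - x^7/5040)\<bar> \<le> \<bar>x\<bar>^9/362880"
    apply (simp add: sin_coeff_def lessThan_nat_numeral fact_numeral)
    apply (simp add: algebra_simps)
    done
  thus ?thesis unfolding abs_le_iff by linarith
qed

definition hh :: "real \<Rightarrow> real" where
  "hh d = 1/(d+1)^2 + 1/d^2 + 1/(d-1)^2 + 1/(d-2)^2"

lemma approach1: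
  fixes d d1 d2 :: real
  assumes d: "0 \<le> d1" "d1 \<le> d" "d \<le> d2" "d2 \<le> 1/2" "0 < d"
  and sl: "0 \<le> 1 - (315/100*d2)^2/6 + (314/100*d1)^4/120 - (315/100*d2)^6/5040 - (315/100*d2)^8/362880"
  shows "(sin (pi*d))^2 * hh d \<ge> (314/100)^2 * (1 - (315/100*d2)^2/6 + (314/100*d1)^4/120 - (315/100*d2)^6/5040 - (315/100*d2)^8/362880)^2
            * (1 + d1^2/(d2+1)^2 + d1^2/(1-d1)^2 + d1^2/(2-d1)^2)"
proof -
  let ?sl = "1 - (315/100*d2)^2/6 + (314/100*d1)^4/120 - (315/100*d2)^6/5040 - (315/100*d2)^8/362880"
  define x where "x = pi * d"
  have x0: "0 < x" using d by (simp add: x_def)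
  have xl: "314/100 * d1 \<le> x" using pi_lb d unfolding x_def
    by (intro mult_mono) auto
  have xu: "x \<le> 315/100 * d2" using pi_ub d unfolding x_def
    by (intro mult_mono) auto
  have p2: "x^2 \<le> (315/100*d2)^2" using xu x0 by (intro power_mono) auto
  have p4: "(314/100*d1)^4 \<le> x^4" using xl d by (intro power_mono) auto
  have p6: "x^6 \<le> (315/100*d2)^6" using xu x0 by (intro power_mono) auto
  have p8: "x^8 \<le> (315/100*d2)^8" using xu x0 by (intro power_mono) auto
  have s: "sin x \<ge> x * (1 - x^2/6 + x^4/120 - x^6/5040 - x^8/362880)"
    using sin_lower[of x] x0 by (simp add: algebra_simps power_abs eval_nat_numeral)
  have "1 - x^2/6 + x^4/120 - x^6/5040 - x^8/362880 \<ge> ?sl" using p2 p4 p6 p8 by linarith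
  hence "x * (1 - x^2/6 + x^4/120 - x^6/5040 - x^8/362880) \<ge> x * ?sl" using x0 by (intro mult_left_mono) auto
  with s have s2: "sin x \<ge> x * ?sl" by linarith
  have "x * ?sl \<ge> 0" using x0 sl by simp
  hence "(sin x)^2 \<ge> (x * ?sl)^2" using s2 by (intro power_mono) auto
  also have "(x * ?sl)^2 = pi^2 * ?sl^2 * d^2" by (simp add: x_def power_mult_distrib)
  finally have A: "(sin x)^2 \<ge> pi^2 * ?sl^2 * d^2" .
  have pi2: "pi^2 \<ge> (314/100)^2" using pi_lb by (intro power_mono) auto
  have B: "d^2 * hh d \<ge> 1 + d1^2/(d2+1)^2 + d1^2/(1-d1)^2 + d1^2/(2-d1)^2"
  proof -
    have q1: "(d-1)^2 = (1-d)^2" "(d-2)^2 = (2-d)^2" by (simp_all add: power2_commute)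
    have "d^2 * hh d = d^2 * (1/(d+1)^2) + d^2*(1/d^2) + d^2*(1/(1-d)^2) + d^2*(1/(2-d)^2)"
      unfolding hh_def q1 by (simp only: distrib_left)
    also have "d^2*(1/d^2) = 1" using d by simp
    finally have e: "d^2 * hh d = d^2/(d+1)^2 + 1 + d^2/(1-d)^2 + d^2/(2-d)^2" by simp
    have t1: "d1^2/(d2+1)^2 \<le> d^2/(d+1)^2"
      using d by (intro frac_le power_mono) auto
    have t2: "d1^2/(1-d1)^2 \<le> d^2/(1-d)^2"
      using d by (intro frac_le power_mono) auto
    have t3: "d1^2/(2-d1)^2 \<le> d^2/(2-d)^2"
      using d by (intro frac_le power_mono) auto
    show ?thesis using e t1 t2 t3 by linarith
  qed
  have "(sin (pi*d))^2 * hh d = ((sin x)^2 / d^2) * (d^2 * hh d)" using d by (simp add: x_def)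
  moreover have "(sin x)^2 / d^2 \<ge> pi^2 * ?sl^2" using A d by (simp add: pos_le_divide_eq)
  hence "((sin x)^2 / d^2) * (d^2 * hh d) \<ge> (pi^2 * ?sl^2) * (1 + d1^2/(d2+1)^2 + d1^2/(1-d1)^2 + d1^2/(2-d1)^2)"
    using B by (intro mult_mono) (auto intro!: add_nonneg_nonneg)
  moreover have "(pi^2 * ?sl^2) * (1 + d1^2/(d2+1)^2 + d1^2/(1-d1)^2 + d1^2/(2-d1)^2) \<ge> ((314/100)^2 * ?sl^2) * (1 + d1^2/(d2+1)^2 + d1^2/(1-d1)^2 + d1^2/(2-d1)^2)"
    using pi2 by (intro mult_right_mono) (auto intro!: add_nonneg_nonneg)
  ultimately show ?thesis by linarith
qed


lemma approach2:
  fixes d d1 d2 :: real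
  assumes d: "0 \<le> d1" "d1 \<le> d" "d \<le> d2" "d2 \<le> 1/2" "0 < d"
  and st: "0 \<le> (314/100*d1) - (314/100*d1)^3/6 + (314/100*d1)^5/120 - (314/100*d1)^7/5040 - (314/100*d1)^9/362880"
  shows "(sin (pi*d))^2 * hh d \<ge> ((314/100*d1) - (314/100*d1)^3/6 + (314/100*d1)^5/120 - (314/100*d1)^7/5040 - (314/100*d1)^9/362880)^2
            * (1/(d2+1)^2 + 1/d2^2 + 1/(1-d1)^2 + 1/(2-d1)^2)"
proof -
  let ?y = "314/100*d1"
  let ?st = "?y - ?y^3/6 + ?y^5/120 - ?y^7/5040 - ?y^9/362880"
  have y0: "0 \<le> ?y" using d by simp
  have yx: "?y \<le> pi * d" using pi_lb d by (intro mult_mono) auto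
  have xp: "pi * d \<le> pi/2" using d by simp
  have "sin ?y \<le> sin (pi * d)"
    by (rule sin_monotone_2pi_le) (use y0 yx xp pi_gt_zero in \<open>linarith+\<close>)
  moreover have "?st \<le> sin ?y" using sin_lower[of ?y] y0 by (simp add: power_abs)
  ultimately have s: "?st \<le> sin (pi*d)" by linarith
  hence A: "?st^2 \<le> (sin (pi*d))^2" using st by (intro power_mono) auto
  have q1: "(d-1)^2 = (1-d)^2" "(d-2)^2 = (2-d)^2" by (simp_all add: power2_commute)
  have t1: "1/(d2+1)^2 \<le> 1/(d+1)^2" using d by (intro divide_left_mono power_mono mult_pos_pos) auto
  have t2: "1/d2^2 \<le> 1/d^2" using d by (intro divide_left_mono power_mono mult_pos_pos) auto
  have t3: "1/(1-d1)^2 \<le> 1/(1-d)^2" using d by (intro divide_left_mono power_mono mult_pos_pos) auto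
  have t4: "1/(2-d1)^2 \<le> 1/(2-d)^2" using d by (intro divide_left_mono power_mono mult_pos_pos) auto
  have B: "1/(d2+1)^2 + 1/d2^2 + 1/(1-d1)^2 + 1/(2-d1)^2 \<le> hh d"
    unfolding hh_def q1 using t1 t2 t3 t4 by linarith
  show ?thesis using A B by (intro mult_mono) (auto intro!: add_nonneg_nonneg)
qed


definition SL :: "real \<Rightarrow> real \<Rightarrow> real" where
  "SL d1 d2 = 1 - (315/100*d2)^2/6 + (314/100*d1)^4/120 - (315/100*d2)^6/5040 - (315/100*d2)^8/362880"
definition ST :: "real \<Rightarrow> real" where
  "ST d1 = (314/100*d1) - (314/100*d1)^3/6 + (314/100*d1)^5/120 - (314/100*d1)^7/5040 - (314/100*d1)^9/362880"

lemma ap1: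
  assumes "0 \<le> d1" "d1 \<le> d" "d \<le> d2" "d2 \<le> 1/2" "0 < d" "0 \<le> SL d1 d2"
    "8 \<le> (314/100)^2 * (SL d1 d2)^2 * (1 + d1^2/(d2+1)^2 + d1^2/(1-d1)^2 + d1^2/(2-d1)^2)"
  shows "(sin (pi*d))^2 * hh d \<ge> 8"
  using approach1[of d1 d d2] assms unfolding SL_def by linarith

lemma ap2:
  assumes "0 \<le> d1" "d1 \<le> d" "d \<le> d2" "d2 \<le> 1/2" "0 < d" "0 \<le> ST d1"
    "8 \<le> (ST d1)^2 * (1/(d2+1)^2 + 1/d2^2 + 1/(1-d1)^2 + 1/(2-d1)^2)"
  shows "(sin (pi*d))^2 * hh d \<ge> 8"
  using approach2[of d1 d d2] assms unfolding ST_def by linarith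

lemma G_half:
  assumes "0 < d" "d \<le> 1/2"
  shows "(sin (pi*d))^2 * hh d \<ge> 8"
proof -
  have c0: "0/1 \<le> d \<Longrightarrow> d \<le> 1/20 \<Longrightarrow> ?thesis"
    by (rule ap1[of "0/1" d "1/20"]) (use assms in \<open>simp_all add: SL_def power_divide\<close>)
  have c1: "1/20 \<le> d \<Longrightarrow> d \<le> 1/10 \<Longrightarrow> ?thesis"
    by (rule ap1[of "1/20" d "1/10"]) (use assms in \<open>simp_all add: SL_def power_divide\<close>)
  have c2: "1/10 \<le> d \<Longrightarrow> d \<le> 3/20 \<Longrightarrow> ?thesis"
    by (rule ap1[of "1/10" d "3/20"]) (use assms in \<open>simp_all add: SL_def power_divide\<close>)
  have c3: "3/20 \<le> d \<Longrightarrow> d \<le> 1/5 \<Longrightarrow> ?thesis"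
    by (rule ap1[of "3/20" d "1/5"]) (use assms in \<open>simp_all add: SL_def power_divide\<close>)
  have c4: "1/5 \<le> d \<Longrightarrow> d \<le> 1/4 \<Longrightarrow> ?thesis"
    by (rule ap1[of "1/5" d "1/4"]) (use assms in \<open>simp_all add: SL_def power_divide\<close>)
  have c5: "1/4 \<le> d \<Longrightarrow> d \<le> 3/10 \<Longrightarrow> ?thesis"
    by (rule ap1[of "1/4" d "3/10"]) (use assms in \<open>simp_all add: SL_def power_divide\<close>)
  have c6: "3/10 \<le> d \<Longrightarrow> d \<le> 7/20 \<Longrightarrow> ?thesis"
    by (rule ap1[of "3/10" d "7/20"]) (use assms in \<open>simp_all add: SL_def power_divide\<close>)
  have c7: "7/20 \<le> d \<Longrightarrow> d \<le> 3/8 \<Longrightarrow> ?thesis"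
    by (rule ap2[of "7/20" d "3/8"]) (use assms in \<open>simp_all add: ST_def power_divide\<close>)
  have c8: "3/8 \<le> d \<Longrightarrow> d \<le> 2/5 \<Longrightarrow> ?thesis"
    by (rule ap2[of "3/8" d "2/5"]) (use assms in \<open>simp_all add: ST_def power_divide\<close>)
  have c9: "2/5 \<le> d \<Longrightarrow> d \<le> 17/40 \<Longrightarrow> ?thesis"
    by (rule ap2[of "2/5" d "17/40"]) (use assms in \<open>simp_all add: ST_def power_divide\<close>)
  have c10: "17/40 \<le> d \<Longrightarrow> d \<le> 9/20 \<Longrightarrow> ?thesis"
    by (rule ap2[of "17/40" d "9/20"]) (use assms in \<open>simp_all add: ST_def power_divide\<close>)
  have c11: "9/20 \<le> d \<Longrightarrow> d \<le> 19/40 \<Longrightarrow> ?thesis"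
    by (rule ap2[of "9/20" d "19/40"]) (use assms in \<open>simp_all add: ST_def power_divide\<close>)
  have c12: "19/40 \<le> d \<Longrightarrow> d \<le> 1/2 \<Longrightarrow> ?thesis"
    by (rule ap2[of "19/40" d "1/2"]) (use assms in \<open>simp_all add: ST_def power_divide\<close>)
  show ?thesis using c0 c1 c2 c3 c4 c5 c6 c7 c8 c9 c10 c11 c12 assms by linarith
qed


lemma hh_sym: "hh (1 - d) = hh d"
proof -
  have "(1 - d + 1)^2 = (d - 2)^2" "(1-d)^2 = (d-1)^2" "(1 - d - 1)^2 = d^2" "(1 - d - 2)^2 = (d+1)^2"
    by (simp_all add: power2_eq_square algebra_simps)
  thus ?thesis unfolding hh_def by simp
qed

lemma G_full:
  assumes "0 < d" "d < 1"
  shows "(sin (pi*d))^2 * hh d \<ge> 8"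
proof (cases "d \<le> 1/2")
  case True thus ?thesis using G_half assms by simp
next
  case False
  have "(sin (pi*(1-d)))^2 * hh (1-d) \<ge> 8" using G_half[of "1-d"] assms False by simp
  moreover have "sin (pi*(1-d)) = sin (pi*d)"
    by (simp add: right_diff_distrib sin_diff)
  ultimately show ?thesis by (simp add: hh_sym)
qed

lemma pi_sq_ge8: "8 \<le> pi^2"
proof -
  have "(314/100::real)^2 \<le> pi^2" using pi_lb by (intro power_mono) auto
  thus ?thesis by (simp add: power_divide)
qed

lemma sin_sq_shift: "(sin (x - pi * real_of_int n))^2 = (sin x)^2"
  by (simp add: sin_diff power2_eq_square)

lemma fejer_term:
  assumes M: "0 < M" and nd: "d \<noteq> real_of_int n"
  shows "(cmod (\<Sum>c<M. cis (real c * (2 * pi * (d - real_of_int n) / real M))))\<^sup>2 / (real M)^2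
           \<ge> (sin (pi * d))^2 / (pi^2 * (d - real_of_int n)^2)"
proof -
  let ?a = "2 * pi * (d - real_of_int n) / real M"
  let ?S = "(cmod (\<Sum>c<M. cis (real c * ?a)))\<^sup>2"
  have g: "?S * (sin (?a/2))^2 = (sin (real M * ?a / 2))^2" by (rule geom_cis)
  have "real M * ?a / 2 = pi * (d - real_of_int n)" using M by simp
  hence "real M * ?a / 2 = pi * d - pi * real_of_int n" by (simp add: right_diff_distrib)
  hence "(sin (real M * ?a / 2))^2 = (sin (pi * d))^2"
    by (simp only: sin_sq_shift)
  with g have g2: "?S * (sin (?a/2))^2 = (sin (pi * d))^2" by simp
  have "(sin (?a/2))^2 \<le> (?a/2)^2"
    using abs_sin_x_le_abs_x[of "?a/2"] by (metis abs_ge_zero power2_abs power_mono)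
  hence "?S * (sin (?a/2))^2 \<le> ?S * (?a/2)^2" by (intro mult_left_mono) auto
  hence le: "(sin (pi * d))^2 \<le> ?S * (?a/2)^2" using g2 by simp
  have "(?a/2)^2 = pi^2 * (d - real_of_int n)^2 / (real M)^2"
    by (simp add: power_divide power_mult_distrib)
  with le have "(sin (pi * d))^2 \<le> ?S * (pi^2 * (d - real_of_int n)^2) / (real M)^2" by simp
  moreover have "pi^2 * (d - real_of_int n)^2 > 0" using nd by simp
  ultimately show ?thesis using M by (simp add: divide_le_eq field_simps)
qed


definition Kf :: "nat \<Rightarrow> real \<Rightarrow> real" where
  "Kf M b = (cmod (\<Sum>c<M. cis (real c * b)))\<^sup>2 / (real M)^2"

lemma Kf_nonneg: "0 \<le> Kf M b" by (simp add: Kf_def)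

lemma fejer4:
  assumes M: "0 < M" and d: "0 \<le> d" "d < 1"
  shows "Kf M (2*pi*(d - (-1))/real M) + Kf M (2*pi*(d - 0)/real M) + Kf M (2*pi*(d - 1)/real M)
          + Kf M (2*pi*(d - 2)/real M) \<ge> 8 / pi^2"
proof (cases "d = 0")
  case True
  have "Kf M (2*pi*(d - 0)/real M) = 1" using True M by (simp add: Kf_def)
  moreover have "8 / pi^2 \<le> 1" using pi_sq_ge8 by simp
  ultimately show ?thesis using Kf_nonneg[of M] by (smt (verit))
next
  case False
  hence d0: "0 < d" using d by simp
  have t: "\<And>n::int. d \<noteq> real_of_int n \<Longrightarrow> Kf M (2*pi*(d - real_of_int n)/real M) \<ge> (sin (pi * d))^2 / (pi^2 * (d - real_of_int n)^2)"
    unfolding Kf_def using fejer_term[OF M] by simp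
  have t1: "Kf M (2*pi*(d - (-1))/real M) \<ge> (sin (pi * d))^2 / (pi^2 * (d + 1)^2)"
    using t[of "-1"] d by simp
  have t2: "Kf M (2*pi*(d - 0)/real M) \<ge> (sin (pi * d))^2 / (pi^2 * d^2)"
    using t[of 0] d0 by simp
  have t3: "Kf M (2*pi*(d - 1)/real M) \<ge> (sin (pi * d))^2 / (pi^2 * (d - 1)^2)"
    using t[of 1] d by simp
  have t4: "Kf M (2*pi*(d - 2)/real M) \<ge> (sin (pi * d))^2 / (pi^2 * (d - 2)^2)"
    using t[of 2] d by simp
  have "(sin (pi * d))^2 / (pi^2 * (d + 1)^2) + (sin (pi * d))^2 / (pi^2 * d^2) + (sin (pi * d))^2 / (pi^2 * (d - 1)^2)
        + (sin (pi * d))^2 / (pi^2 * (d - 2)^2) = (sin (pi*d))^2 * hh d / pi^2"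
    unfolding hh_def by (simp add: field_simps)
  also have "\<dots> \<ge> 8 / pi^2" using G_full[OF d0 d(2)] by (simp add: divide_right_mono)
  finally show ?thesis using t1 t2 t3 t4 by linarith
qed


locale lay =
  fixes d Q M :: nat
  assumes dpos: "0 < d" and Qpos: "0 < Q" and Mpos: "0 < M" and Qeven: "even Q"
begin

definition NN where "NN = d * (Q * M)"
definition Lidx where "Lidx u q c = (u * Q + q) * M + c"
definition lv :: "(nat \<Rightarrow> nat \<Rightarrow> nat \<Rightarrow> complex) \<Rightarrow> complex vec" where
  "lv f = vec NN (\<lambda>i. f (i div (Q*M)) ((i div M) mod Q) (i mod M))"

lemma Lidx_lt: "u < d \<Longrightarrow> q < Q \<Longrightarrow> c < M \<Longrightarrow> Lidx u q c < NN"
  unfolding Lidx_def NN_def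
  by (metis mr_lt mult.assoc mult.commute)

lemma Lidx_dec:
  assumes "q < Q" "c < M"
  shows "Lidx u q c div (Q*M) = u" "(Lidx u q c div M) mod Q = q" "Lidx u q c mod M = c"
proof -
  have a: "Lidx u q c div M = u * Q + q" unfolding Lidx_def using assms by simp
  show "(Lidx u q c div M) mod Q = q" using a assms by simp
  show "Lidx u q c mod M = c" unfolding Lidx_def using assms by simp
  show "Lidx u q c div (Q*M) = u" using a assms by (simp add: div_mult2_eq mult.commute)
qed

lemma idx_cases:
  assumes "i < NN"
  obtains u q c where "u < d" "q < Q" "c < M" "i = Lidx u q c"
proof -
  let ?u = "i div (Q*M)" and ?q = "(i div M) mod Q" and ?c = "i mod M"
  have "?u < d" using assms unfolding NN_def by (simp add: less_mult_imp_div_less)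
  moreover have "?q < Q" using Qpos by simp
  moreover have "?c < M" using Mpos by simp
  moreover have "i = Lidx ?u ?q ?c"
  proof -
    have "i div M = (i div M) div Q * Q + (i div M) mod Q" by simp
    moreover have "(i div M) div Q = ?u" by (simp add: div_mult2_eq mult.commute)
    ultimately have "i div M = ?u * Q + ?q" by simp
    thus ?thesis unfolding Lidx_def by (metis div_mult_mod_eq)
  qed
  ultimately show ?thesis using that by blast
qed

lemma lv_dim[simp]: "dim_vec (lv f) = NN" by (simp add: lv_def)

lemma lv_index: "u < d \<Longrightarrow> q < Q \<Longrightarrow> c < M \<Longrightarrow> lv f $ Lidx u q c = f u q c"
  unfolding lv_def using Lidx_lt Lidx_dec by simp

lemma lv_eqI:
  assumes "dim_vec v = NN" "\<And>u q c. u < d \<Longrightarrow> q < Q \<Longrightarrow> c < M \<Longrightarrow> v $ Lidx u q c = f u q c"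
  shows "v = lv f"
proof (rule eq_vecI)
  fix i assume "i < dim_vec (lv f)"
  hence "i < NN" by simp
  then obtain u q c where "u < d" "q < Q" "c < M" "i = Lidx u q c" by (rule idx_cases)
  thus "v $ i = lv f $ i" using assms(2) lv_index by simp
qed (use assms in simp)

lemma bmat_lv:
  "bmat NN M U *\<^sub>v lv f = lv (\<lambda>u q c. \<Sum>c'<M. U $$ (c, c') * f u q c')"
proof (rule lv_eqI)
  fix u q c assume h: "u < d" "q < Q" "c < M"
  have NN: "NN = (d * Q) * M" unfolding NN_def by simp
  have "(bmat NN M U *\<^sub>v lv f) $ Lidx u q c = (\<Sum>c'<M. U $$ (Lidx u q c mod M, c') * lv f $ ((Lidx u q c div M) * M + c'))"
    by (rule bmat_mult[OF lv_dim NN Lidx_lt[OF h]])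
  also have "\<dots> = (\<Sum>c'<M. U $$ (c, c') * f u q c')"
  proof (rule sum.cong)
    fix c' assume "c' \<in> {..<M}"
    hence c': "c' < M" by simp
    have "(Lidx u q c div M) * M + c' = Lidx u q c'" unfolding Lidx_def using h by simp
    thus "U $$ (Lidx u q c mod M, c') * lv f $ ((Lidx u q c div M) * M + c') = U $$ (c, c') * f u q c'"
      using lv_index[OF h(1,2) c'] Lidx_dec h by simp
  qed simp
  finally show "(bmat NN M U *\<^sub>v lv f) $ Lidx u q c = (\<Sum>c'<M. U $$ (c, c') * f u q c')" .
qed (simp add: bmat_def)


lemma query_lv:
  assumes U: "is_unitary d Orc"
  shows "query_op NN Orc dag (Q*M) *\<^sub>v lv f = lv (\<lambda>u q c. \<Sum>u'<d. (if dag then adj Orc else Orc) $$ (u, u') * f u' q c)"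
proof (rule lv_eqI)
  fix u q c assume h: "u < d" "q < Q" "c < M"
  have QM: "0 < Q * M" using Qpos Mpos by simp
  have "(query_op NN Orc dag (Q*M) *\<^sub>v lv f) $ Lidx u q c =
     (\<Sum>u'<d. (if dag then adj Orc else Orc) $$ (Lidx u q c div (Q*M), u') * lv f $ (u' * (Q*M) + Lidx u q c mod (Q*M)))"
    by (rule query_mult[OF U NN_def QM lv_dim Lidx_lt[OF h]])
  also have "\<dots> = (\<Sum>u'<d. (if dag then adj Orc else Orc) $$ (u, u') * f u' q c)"
  proof (rule sum.cong)
    fix u' assume "u' \<in> {..<d}"
    hence u': "u' < d" by simp
    have l1: "Lidx u q c = u * (Q*M) + (q * M + c)" unfolding Lidx_def by (simp add: algebra_simps)
    have l2: "q * M + c < Q * M" using h by (intro mr_lt) auto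
    have "Lidx u q c mod (Q*M) = q * M + c" unfolding l1 using l2 by (rule mr_mod)
    hence "u' * (Q*M) + Lidx u q c mod (Q*M) = Lidx u' q c" unfolding Lidx_def by (simp add: algebra_simps)
    thus "(if dag then adj Orc else Orc) $$ (Lidx u q c div (Q*M), u') * lv f $ (u' * (Q*M) + Lidx u q c mod (Q*M))
        = (if dag then adj Orc else Orc) $$ (u, u') * f u' q c"
      using lv_index[OF u' h(2,3)] Lidx_dec h by simp
  qed simp
  finally show "(query_op NN Orc dag (Q*M) *\<^sub>v lv f) $ Lidx u q c = (\<Sum>u'<d. (if dag then adj Orc else Orc) $$ (u, u') * f u' q c)" .
qed (simp add: query_op_def Let_def)

lemma dmat_lv:
  "dmat NN (\<lambda>i. G (i div (Q*M)) ((i div M) mod Q) (i mod M)) *\<^sub>v lv f = lv (\<lambda>u q c. G u q c * f u q c)"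
proof (rule lv_eqI)
  fix u q c assume h: "u < d" "q < Q" "c < M"
  show "(dmat NN (\<lambda>i. G (i div (Q*M)) ((i div M) mod Q) (i mod M)) *\<^sub>v lv f) $ Lidx u q c = G u q c * f u q c"
    using dmat_mult[OF lv_dim] Lidx_lt[OF h] lv_index[OF h] Lidx_dec h by simp
qed (simp add: dmat_def)

lemma dmat_lv_unitary:
  assumes "\<And>u q c. G u q c = 1 \<or> G u q c = -1"
  shows "is_unitary NN (dmat NN (\<lambda>i. G (i div (Q*M)) ((i div M) mod Q) (i mod M)))"
proof (rule dmat_unitary)
  fix i
  show "G (i div (Q*M)) ((i div M) mod Q) (i mod M) * cnj (G (i div (Q*M)) ((i div M) mod Q) (i mod M)) = 1"
    using assms[of "i div (Q*M)" "(i div M) mod Q" "i mod M"] by auto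
qed

end


lemma run_circ_append: "run_circ N Or (xs @ ys) v = run_circ N Or ys (run_circ N Or xs v)"
  by (induction xs arbitrary: v) auto

context lay begin

definition fq :: "nat set \<Rightarrow> nat \<Rightarrow> nat \<Rightarrow> nat" where
  "fq S q c = (if c \<in> S then (if even q then q + 1 else q - 1) else q)"

definition fl :: "nat set \<Rightarrow> nat \<Rightarrow> nat" where
  "fl S i = (if i mod M \<in> S then (if even ((i div M) mod Q) then i + M else i - M) else i)"

lemma fq_lt: "q < Q \<Longrightarrow> fq S q c < Q"
  unfolding fq_def using Qeven by (auto elim!: evenE oddE simp: )

lemma fq_fq: "q < Q \<Longrightarrow> fq S (fq S q c) c = q"
  unfolding fq_def by (auto elim!: oddE)

lemma fl_Lidx: "u < d \<Longrightarrow> q < Q \<Longrightarrow> c < M \<Longrightarrow> fl S (Lidx u q c) = Lidx u (fq S q c) c"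
proof -
  assume h: "u < d" "q < Q" "c < M"
  have D: "Lidx u q c mod M = c" "(Lidx u q c div M) mod Q = q" using Lidx_dec[OF h(2,3)] by auto
  have F: "fl S (Lidx u q c) = (if c \<in> S then (if even q then Lidx u q c + M else Lidx u q c - M) else Lidx u q c)"
    unfolding fl_def D by simp
  show ?thesis
  proof (cases "c \<in> S")
    case False thus ?thesis unfolding F fq_def by simp
  next
    case True
    show ?thesis
    proof (cases "even q")
      case True
      have "Lidx u q c + M = Lidx u (q + 1) c" unfolding Lidx_def by (simp add: algebra_simps)
      thus ?thesis using \<open>c \<in> S\<close> True unfolding F fq_def by simp
    next
      case False
      hence q1: "q \<ge> 1" by (cases q) auto
      have "Lidx u q c = Lidx u (q - 1) c + M" unfolding Lidx_def using q1
        by (cases q) (auto simp: algebra_simps)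
      hence "Lidx u q c - M = Lidx u (q - 1) c" by simp
      thus ?thesis using \<open>c \<in> S\<close> False unfolding F fq_def by simp
    qed
  qed
qed

lemma fl_lt: "i < NN \<Longrightarrow> fl S i < NN"
proof -
  assume "i < NN"
  then obtain u q c where h: "u < d" "q < Q" "c < M" "i = Lidx u q c" by (rule idx_cases)
  thus ?thesis using fl_Lidx[OF h(1-3)] Lidx_lt fq_lt by simp
qed

lemma fl_fl: "i < NN \<Longrightarrow> fl S (fl S i) = i"
proof -
  assume "i < NN"
  then obtain u q c where h: "u < d" "q < Q" "c < M" "i = Lidx u q c" by (rule idx_cases)
  thus ?thesis using fl_Lidx[OF h(1-3)] fl_Lidx[OF h(1) fq_lt[OF h(2)] h(3)] fq_fq[OF h(2)] by simp
qed

lemma fl_unitary: "is_unitary NN (pmat NN (fl S))"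
proof (rule pmat_unitary)
  show "inj_on (fl S) {..<NN}" by (rule inj_on_inverseI[where g="fl S"]) (simp add: fl_fl)
qed (rule fl_lt)

lemma flip_lv: "pmat NN (fl S) *\<^sub>v lv f = lv (\<lambda>u q c. f u (fq S q c) c)"
proof (rule lv_eqI)
  fix u q c assume h: "u < d" "q < Q" "c < M"
  have "(pmat NN (fl S) *\<^sub>v lv f) = vec NN (\<lambda>i. lv f $ fl S i)" by (rule pmat_mult) (auto simp: fl_lt)
  thus "(pmat NN (fl S) *\<^sub>v lv f) $ Lidx u q c = f u (fq S q c) c"
    using Lidx_lt[OF h] fl_Lidx[OF h] lv_index[OF h(1) fq_lt[OF h(2)] h(3)] by simp
qed (simp add: pmat_def)

definition sig :: "nat \<Rightarrow> nat" where
  "sig i = ((((i div M) mod Q) div 2 * M + i mod M) * d + i div (Q*M)) * 2 + ((i div M) mod Q) mod 2"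

lemma sig_Lidx: "q < Q \<Longrightarrow> c < M \<Longrightarrow> sig (Lidx u q c) = (((q div 2) * M + c) * d + u) * 2 + q mod 2"
  unfolding sig_def using Lidx_dec by simp

lemma NN_alt: "NN = (Q div 2) * M * d * 2"
  unfolding NN_def using Qeven by (auto elim!: evenE)

lemma sig_lt: "i < NN \<Longrightarrow> sig i < NN"
proof -
  assume "i < NN"
  then obtain u q c where h: "u < d" "q < Q" "c < M" "i = Lidx u q c" by (rule idx_cases)
  have "q < (Q div 2) * 2" using h(2) Qeven by simp
  hence "q div 2 < Q div 2" by (rule less_mult_imp_div_less)
  hence "(q div 2) * M + c < (Q div 2) * M" using mr_lt[OF h(3)] by blast
  hence "((q div 2) * M + c) * d + u < (Q div 2) * M * d" using mr_lt[OF h(1)] by blast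
  hence "(((q div 2) * M + c) * d + u) * 2 + q mod 2 < (Q div 2) * M * d * 2" using mr_lt[of "q mod 2" 2] by simp
  thus ?thesis using sig_Lidx h NN_alt by simp
qed

lemma sig_inj: "inj_on sig {..<NN}"
proof (rule inj_onI)
  fix i j assume i: "i \<in> {..<NN}" and j: "j \<in> {..<NN}" and e: "sig i = sig j"
  obtain u q c where h: "u < d" "q < Q" "c < M" "i = Lidx u q c" using i by (auto elim: idx_cases)
  obtain u' q' c' where h': "u' < d" "q' < Q" "c' < M" "j = Lidx u' q' c'" using j by (auto elim: idx_cases)
  have E: "(((q div 2) * M + c) * d + u) * 2 + q mod 2 = (((q' div 2) * M + c') * d + u') * 2 + q' mod 2"
    using e h h' sig_Lidx by simp
  have "q mod 2 = ((((q div 2) * M + c) * d + u) * 2 + q mod 2) mod 2" by (rule mr_mod[symmetric]) simp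
  also have "\<dots> = ((((q' div 2) * M + c') * d + u') * 2 + q' mod 2) mod 2" using E by simp
  also have "\<dots> = q' mod 2" by (rule mr_mod) simp
  finally have b: "q mod 2 = q' mod 2" .
  have "((q div 2) * M + c) * d + u = ((((q div 2) * M + c) * d + u) * 2 + q mod 2) div 2" by (rule mr_div[symmetric]) simp
  also have "\<dots> = ((((q' div 2) * M + c') * d + u') * 2 + q' mod 2) div 2" using E by simp
  also have "\<dots> = ((q' div 2) * M + c') * d + u'" by (rule mr_div) simp
  finally have E1: "((q div 2) * M + c) * d + u = ((q' div 2) * M + c') * d + u'" .
  have uu: "u = u'" using arg_cong[OF E1, of "\<lambda>x. x mod d"] h h' by simp
  have E2: "(q div 2) * M + c = (q' div 2) * M + c'" using arg_cong[OF E1, of "\<lambda>x. x div d"] h h' by simp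
  have cc: "c = c'" using arg_cong[OF E2, of "\<lambda>x. x mod M"] h h' by simp
  have "q div 2 = q' div 2" using arg_cong[OF E2, of "\<lambda>x. x div M"] h h' by simp
  hence "q = q'" using b by (metis div_mult_mod_eq)
  thus "i = j" using h h' uu cc by simp
qed

lemma sig_unitary: "is_unitary NN (pmat NN sig)"
  by (rule pmat_unitary[OF sig_lt sig_inj])

lemma init_lv:
  assumes "q0 < Q"
  shows "pmat NN sig *\<^sub>v unit_vec NN (sig (Lidx 0 q0 0)) = lv (\<lambda>u q c. if u = 0 \<and> q = q0 \<and> c = 0 then 1 else 0)"
proof (rule lv_eqI)
  fix u q c assume h: "u < d" "q < Q" "c < M"
  have l0: "Lidx 0 q0 0 < NN" using Lidx_lt[of 0 q0 0] assms dpos Mpos by simp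
  have "(pmat NN sig *\<^sub>v unit_vec NN (sig (Lidx 0 q0 0))) = vec NN (\<lambda>i. unit_vec NN (sig (Lidx 0 q0 0)) $ sig i)"
    by (rule pmat_mult) (auto simp: sig_lt)
  hence "(pmat NN sig *\<^sub>v unit_vec NN (sig (Lidx 0 q0 0))) $ Lidx u q c = (if sig (Lidx u q c) = sig (Lidx 0 q0 0) then 1 else 0)"
    using Lidx_lt[OF h] sig_lt[OF Lidx_lt[OF h]] sig_lt[OF l0] by simp
  also have "(sig (Lidx u q c) = sig (Lidx 0 q0 0)) = (Lidx u q c = Lidx 0 q0 0)"
    using sig_inj Lidx_lt[OF h] l0 by (auto dest: inj_onD)
  also have "(Lidx u q c = Lidx 0 q0 0) = (u = 0 \<and> q = q0 \<and> c = 0)"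
    using Lidx_dec[OF h(2,3), of u] Lidx_dec[OF assms Mpos, of 0] by (auto simp: Lidx_def)
  finally show "(pmat NN sig *\<^sub>v unit_vec NN (sig (Lidx 0 q0 0))) $ Lidx u q c = (if u = 0 \<and> q = q0 \<and> c = 0 then 1 else 0)" .
qed (simp add: pmat_def)

lemma final_idx:
  assumes "dim_vec v = NN" "u < d" "q < Q" "c < M"
  shows "(adj (pmat NN sig) *\<^sub>v v) $ sig (Lidx u q c) = v $ Lidx u q c"
  by (rule adj_pmat_mult[OF sig_lt sig_inj assms(1) Lidx_lt[OF assms(2-4)]])

end


context lay begin

definition Gchi :: "nat \<Rightarrow> nat \<Rightarrow> nat \<Rightarrow> nat \<Rightarrow> nat \<Rightarrow> nat \<Rightarrow> complex" where
  "Gchi A E i u q c = (if i \<le> c \<and> u div A = q div (2*E) then -1 else 1)"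
definition G0 :: "nat \<Rightarrow> nat \<Rightarrow> nat \<Rightarrow> nat \<Rightarrow> complex" where
  "G0 i u q c = (if i \<le> c \<and> u \<noteq> 0 then -1 else 1)"

definition dec :: "(nat \<Rightarrow> nat \<Rightarrow> nat \<Rightarrow> complex) \<Rightarrow> nat \<Rightarrow> complex" where
  "dec G j = G (j div (Q*M)) ((j div M) mod Q) (j mod M)"

definition blk :: "nat \<Rightarrow> nat \<Rightarrow> nat \<Rightarrow> step list" where
  "blk A E i = [Fixed (dmat NN (dec (Gchi A E i))), Query True (Q*M), Fixed (dmat NN (dec (G0 i))), Query False (Q*M)]"

definition QopG :: "complex mat \<Rightarrow> nat \<Rightarrow> nat \<Rightarrow> nat \<Rightarrow> (nat \<Rightarrow> complex) \<Rightarrow> nat \<Rightarrow> complex" where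
  "QopG Orc A E q \<phi> u = (\<Sum>u1<d. Orc $$ (u,u1) * (if u1 \<noteq> 0 then -1 else 1) *
       (\<Sum>u2<d. cnj (Orc $$ (u2,u1)) * (if u2 div A = q div (2*E) then -1 else 1) * \<phi> u2))"

lemma dmat_lv': "dmat NN (dec G) *\<^sub>v lv f = lv (\<lambda>u q c. G u q c * f u q c)"
  unfolding dec_def by (rule dmat_lv)

lemma blk_ok: "list_all (step_ok NN d) (blk A E i)"
proof -
  have "is_unitary NN (dmat NN (dec (Gchi A E i)))" unfolding dec_def
    by (rule dmat_lv_unitary) (simp add: Gchi_def)
  moreover have "is_unitary NN (dmat NN (dec (G0 i)))" unfolding dec_def
    by (rule dmat_lv_unitary) (simp add: G0_def)
  moreover have "0 < Q * M" using Qpos Mpos by simp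
  ultimately show ?thesis unfolding blk_def NN_def by simp
qed

lemma unitary_id_sum:
  assumes U: "is_unitary d Orc" and u: "u < d"
  shows "(\<Sum>u1<d. Orc $$ (u,u1) * (\<Sum>u2<d. cnj (Orc $$ (u2,u1)) * \<phi> u2)) = \<phi> u"
proof -
  have "(\<Sum>u1<d. Orc $$ (u,u1) * (\<Sum>u2<d. cnj (Orc $$ (u2,u1)) * \<phi> u2))
      = (\<Sum>u2<d. (\<Sum>u1<d. Orc $$ (u,u1) * cnj (Orc $$ (u2,u1))) * \<phi> u2)"
    by (simp add: sum_distrib_left sum_distrib_right mult.assoc) (rule sum.swap)
  also have "\<dots> = (\<Sum>u2<d. (if u = u2 then \<phi> u2 else 0))"
    by (rule sum.cong) (simp_all add: unitary_rows[OF U u])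
  also have "\<dots> = \<phi> u" using u by simp
  finally show ?thesis .
qed

lemma blk_lv:
  assumes U: "is_unitary d Orc"
  shows "run_circ NN Orc (blk A E i) (lv F) = lv (\<lambda>u q c. if i \<le> c then QopG Orc A E q (\<lambda>u'. F u' q c) u else F u q c)"
proof -
  have adjE: "\<And>u u'. u < d \<Longrightarrow> u' < d \<Longrightarrow> adj Orc $$ (u,u') = cnj (Orc $$ (u',u))"
    using U unfolding is_unitary_def adj_def by auto
  have "run_circ NN Orc (blk A E i) (lv F) =
    lv (\<lambda>u q c. \<Sum>u1<d. Orc $$ (u,u1) * (G0 i u1 q c * (\<Sum>u2<d. adj Orc $$ (u1,u2) * (Gchi A E i u2 q c * F u2 q c))))"
    unfolding blk_def by (simp add: dmat_lv' query_lv[OF U])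
  also have "\<dots> = lv (\<lambda>u q c. if i \<le> c then QopG Orc A E q (\<lambda>u'. F u' q c) u else F u q c)"
  proof (rule lv_eqI)
    fix u q c assume h: "u < d" "q < Q" "c < M"
    let ?L = "(\<Sum>u1<d. Orc $$ (u,u1) * (G0 i u1 q c * (\<Sum>u2<d. adj Orc $$ (u1,u2) * (Gchi A E i u2 q c * F u2 q c))))"
    have "?L = (if i \<le> c then QopG Orc A E q (\<lambda>u'. F u' q c) u else F u q c)"
    proof (cases "i \<le> c")
      case True
      have "?L = QopG Orc A E q (\<lambda>u'. F u' q c) u"
        unfolding QopG_def
        by (intro sum.cong refl) (use True adjE in \<open>auto simp: G0_def Gchi_def mult.assoc intro!: sum.cong\<close>)
      thus ?thesis using True by simp
    next
      case False
      have "?L = (\<Sum>u1<d. Orc $$ (u,u1) * (\<Sum>u2<d. cnj (Orc $$ (u2,u1)) * F u2 q c))"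
        by (intro sum.cong refl) (use False adjE in \<open>auto simp: G0_def Gchi_def intro!: sum.cong\<close>)
      also have "\<dots> = F u q c" by (rule unitary_id_sum[OF U h(1)])
      finally show ?thesis using False by simp
    qed
    thus "lv (\<lambda>u q c. \<Sum>u1<d. Orc $$ (u,u1) * (G0 i u1 q c * (\<Sum>u2<d. adj Orc $$ (u1,u2) * (Gchi A E i u2 q c * F u2 q c)))) $ Lidx u q c
       = (if i \<le> c then QopG Orc A E q (\<lambda>u'. F u' q c) u else F u q c)"
      using lv_index[OF h] by simp
  qed simp
  finally show ?thesis .
qed

end


context lay begin

lemma QopG_scale: "QopG Orc A E q (\<lambda>u. s * \<phi> u) u = s * QopG Orc A E q \<phi> u"
  unfolding QopG_def by (simp add: sum_distrib_left mult.assoc mult.left_commute)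

lemma QopG_pow_scale: "(QopG Orc A E q ^^ n) (\<lambda>u. s * \<phi> u) = (\<lambda>u. s * (QopG Orc A E q ^^ n) \<phi> u)"
proof (induction n)
  case (Suc n)
  show ?case by (rule ext) (simp add: Suc QopG_scale)
qed simp

lemma loop_lv:
  assumes U: "is_unitary d Orc"
  shows "run_circ NN Orc (concat (map (blk A E) [1..<Suc t])) (lv F)
       = lv (\<lambda>u q c. (QopG Orc A E q ^^ min c t) (\<lambda>u'. F u' q c) u)"
proof (induction t)
  case 0
  have "lv F = lv (\<lambda>u q c. F u q c)" by simp
  thus ?case by simp
next
  case (Suc t)
  have "[1..<Suc (Suc t)] = [1..<Suc t] @ [Suc t]" by simp
  hence "run_circ NN Orc (concat (map (blk A E) [1..<Suc (Suc t)])) (lv F)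
      = run_circ NN Orc (blk A E (Suc t)) (run_circ NN Orc (concat (map (blk A E) [1..<Suc t])) (lv F))"
    by (simp add: run_circ_append)
  also have "\<dots> = lv (\<lambda>u q c. if Suc t \<le> c then QopG Orc A E q (\<lambda>u'. (QopG Orc A E q ^^ min c t) (\<lambda>u'. F u' q c) u') u
                                else (QopG Orc A E q ^^ min c t) (\<lambda>u'. F u' q c) u)"
    unfolding Suc by (rule blk_lv[OF U])
  also have "\<dots> = lv (\<lambda>u q c. (QopG Orc A E q ^^ min c (Suc t)) (\<lambda>u'. F u' q c) u)"
  proof -
    have "\<And>u q c. (if Suc t \<le> c then QopG Orc A E q (\<lambda>u'. (QopG Orc A E q ^^ min c t) (\<lambda>u'. F u' q c) u') u
                                else (QopG Orc A E q ^^ min c t) (\<lambda>u'. F u' q c) u)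
          = (QopG Orc A E q ^^ min c (Suc t)) (\<lambda>u'. F u' q c) u"
    proof -
      fix u q c
      show "(if Suc t \<le> c then QopG Orc A E q (\<lambda>u'. (QopG Orc A E q ^^ min c t) (\<lambda>u'. F u' q c) u') u
                                else (QopG Orc A E q ^^ min c t) (\<lambda>u'. F u' q c) u)
          = (QopG Orc A E q ^^ min c (Suc t)) (\<lambda>u'. F u' q c) u"
      proof (cases "Suc t \<le> c")
        case True
        hence "min c t = t" "min c (Suc t) = Suc t" by auto
        thus ?thesis using True by simp
      next
        case False
        hence "min c t = min c (Suc t)" by auto
        thus ?thesis using False by simp
      qed
    qed
    thus ?thesis by simp
  qed
  finally show ?case .
qed

definition circ :: "nat \<Rightarrow> nat \<Rightarrow> nat set \<Rightarrow> step list" where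
  "circ A E S = [Fixed (pmat NN sig), Fixed (bmat NN M (qft M 1)), Query False (Q*M)]
      @ concat (map (blk A E) [1..<M])
      @ [Fixed (bmat NN M (qft M (-1))), Fixed (pmat NN (fl S)), Fixed (adj (pmat NN sig))]"

lemma circ_ok: "list_all (step_ok NN d) (circ A E S)"
proof -
  have "list_all (step_ok NN d) (concat (map (blk A E) [1..<M]))"
    using blk_ok by (simp add: list_all_iff)
  moreover have "is_unitary NN (bmat NN M (qft M 1))"
    by (rule bmat_unitary[OF qft_unitary]) (use Mpos in \<open>auto simp: NN_def\<close>)
  moreover have "is_unitary NN (bmat NN M (qft M (-1)))"
    by (rule bmat_unitary[OF qft_unitary]) (use Mpos in \<open>auto simp: NN_def\<close>)
  moreover have "0 < Q * M" using Qpos Mpos by simp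
  ultimately show ?thesis unfolding circ_def
    using sig_unitary fl_unitary unitary_adj[OF sig_unitary] by (simp add: NN_def)
qed

lemma nq_blk: "num_queries (concat (map (blk A E) [1..<t])) = 2 * (t - 1)"
proof (induction t)
  case (Suc t)
  show ?case
  proof (cases "t = 0")
    case True thus ?thesis by (simp add: num_queries_def)
  next
    case False
    hence "[1..<Suc t] = [1..<t] @ [t]" by simp
    thus ?thesis using Suc False by (simp add: num_queries_def blk_def)
  qed
qed (simp add: num_queries_def)

lemma nq_circ: "num_queries (circ A E S) = 2 * M - 1"
proof -
  have "num_queries (circ A E S) = 1 + num_queries (concat (map (blk A E) [1..<M]))"
    unfolding circ_def num_queries_def by simp
  thus ?thesis using nq_blk[of A E M] Mpos by simp
qed

end


context lay begin

lemma lv_cong: "(\<And>u q c. u < d \<Longrightarrow> q < Q \<Longrightarrow> c < M \<Longrightarrow> f u q c = g u q c) \<Longrightarrow> lv f = lv g"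
  by (rule lv_eqI) (auto simp: lv_index)

definition Psi :: "complex mat \<Rightarrow> nat \<Rightarrow> nat \<Rightarrow> nat \<Rightarrow> nat \<Rightarrow> nat \<Rightarrow> complex" where
  "Psi Orc A E q0 n = (QopG Orc A E q0 ^^ n) (\<lambda>u. Orc $$ (u,0))"

definition Vout :: "complex mat \<Rightarrow> nat \<Rightarrow> nat \<Rightarrow> nat \<Rightarrow> nat \<Rightarrow> nat \<Rightarrow> complex" where
  "Vout Orc A E q0 y u = (\<Sum>c<M. qft M (-1) $$ (y,c) * (complex_of_real (1 / sqrt (real M)) * Psi Orc A E q0 c u))"

lemma circ_out:
  assumes U: "is_unitary d Orc" and q0: "q0 < Q" "even q0"
  shows "\<And>u y b. u < d \<Longrightarrow> y < M \<Longrightarrow> b < 2 \<Longrightarrow>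
     run_circ NN Orc (circ A E S) (unit_vec NN (sig (Lidx 0 q0 0))) $ sig (Lidx u (q0 + b) y)
       = (if (b = 1) = (y \<in> S) then Vout Orc A E q0 y u else 0)"
proof -
  let ?s = "complex_of_real (1 / sqrt (real M))"
  define F0 :: "nat \<Rightarrow> nat \<Rightarrow> nat \<Rightarrow> complex" where "F0 u q c = (if q = q0 then ?s * Orc $$ (u,0) else 0)" for u q c
  have v1: "run_circ NN Orc [Fixed (pmat NN sig), Fixed (bmat NN M (qft M 1)), Query False (Q*M)] (unit_vec NN (sig (Lidx 0 q0 0)))
      = lv F0"
  proof -
    have "run_circ NN Orc [Fixed (pmat NN sig), Fixed (bmat NN M (qft M 1)), Query False (Q*M)] (unit_vec NN (sig (Lidx 0 q0 0)))
      = lv (\<lambda>u q c. \<Sum>u'<d. Orc $$ (u,u') * (\<Sum>c'<M. qft M 1 $$ (c,c') * (if u' = 0 \<and> q = q0 \<and> c' = 0 then 1 else 0)))"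
      by (simp add: init_lv[OF q0(1)] bmat_lv query_lv[OF U])
    also have "\<dots> = lv F0"
    proof (rule lv_cong)
      fix u q c assume h: "u < d" "q < Q" "c < M"
      have "\<And>u'. (\<Sum>c'<M. qft M 1 $$ (c,c') * (if u' = 0 \<and> q = q0 \<and> c' = 0 then 1 else 0))
              = (if u' = 0 \<and> q = q0 then ?s else 0)"
      proof -
        fix u'
        have "(\<Sum>c'<M. qft M 1 $$ (c,c') * (if u' = 0 \<and> q = q0 \<and> c' = 0 then 1 else 0))
            = (\<Sum>c'<M. if c' = 0 then (if u' = 0 \<and> q = q0 then qft M 1 $$ (c,0) else 0) else 0)"
          by (rule sum.cong) auto
        also have "\<dots> = (if u' = 0 \<and> q = q0 then qft M 1 $$ (c,0) else 0)" using Mpos by simp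
        also have "qft M 1 $$ (c,0) = ?s" unfolding qft_def using h Mpos by simp
        finally show "(\<Sum>c'<M. qft M 1 $$ (c,c') * (if u' = 0 \<and> q = q0 \<and> c' = 0 then 1 else 0))
              = (if u' = 0 \<and> q = q0 then ?s else 0)" .
      qed
      note inner = this
      have "(\<Sum>u'<d. Orc $$ (u,u') * (\<Sum>c'<M. qft M 1 $$ (c,c') * (if u' = 0 \<and> q = q0 \<and> c' = 0 then 1 else 0)))
          = (\<Sum>u'<d. Orc $$ (u,u') * (if u' = 0 \<and> q = q0 then ?s else 0))"
        by (simp only: inner)
      also have "\<dots> = (\<Sum>u'<d. if u' = 0 then Orc $$ (u,0) * (if q = q0 then ?s else 0) else 0)"
        by (rule sum.cong) auto
      also have "\<dots> = F0 u q c" using dpos unfolding F0_def by simp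
      finally show "(\<Sum>u'<d. Orc $$ (u,u') * (\<Sum>c'<M. qft M 1 $$ (c,c') * (if u' = 0 \<and> q = q0 \<and> c' = 0 then 1 else 0)))
          = F0 u q c" .
    qed
    finally show ?thesis .
  qed
  have Mm: "[1..<M] = [1..<Suc (M - 1)]" using Mpos by simp
  have v2: "run_circ NN Orc (concat (map (blk A E) [1..<M])) (lv F0)
      = lv (\<lambda>u q c. if q = q0 then ?s * Psi Orc A E q0 c u else 0)"
    unfolding Mm loop_lv[OF U]
  proof (rule lv_cong)
    fix u q c assume h: "u < d" "q < Q" "c < M"
    hence mc: "min c (M - 1) = c" by simp
    show "(QopG Orc A E q ^^ min c (M - 1)) (\<lambda>u'. F0 u' q c) u = (if q = q0 then ?s * Psi Orc A E q0 c u else 0)"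
    proof (cases "q = q0")
      case True
      have eq: "(\<lambda>u'. F0 u' q c) = (\<lambda>u'. ?s * Orc $$ (u',0))" using True unfolding F0_def by simp
      show ?thesis using True unfolding mc eq QopG_pow_scale Psi_def by simp
    next
      case False
      have eq: "(\<lambda>u'. F0 u' q c) = (\<lambda>u'. 0 * Orc $$ (u',0))" using False unfolding F0_def by simp
      show ?thesis using False unfolding mc eq QopG_pow_scale by simp
    qed
  qed
  have v3: "run_circ NN Orc [Fixed (bmat NN M (qft M (-1))), Fixed (pmat NN (fl S)), Fixed (adj (pmat NN sig))]
      (lv (\<lambda>u q c. if q = q0 then ?s * Psi Orc A E q0 c u else 0))
    = adj (pmat NN sig) *\<^sub>v lv (\<lambda>u q y. \<Sum>c<M. qft M (-1) $$ (y,c) * (if fq S q y = q0 then ?s * Psi Orc A E q0 c u else 0))"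
    by (simp add: bmat_lv flip_lv)
  fix u y b :: nat assume h: "u < d" "y < M" "b < 2"
  have qb: "q0 + b < Q" using q0 h(3) Qeven by (cases b) (auto elim!: evenE)
  have "run_circ NN Orc (circ A E S) (unit_vec NN (sig (Lidx 0 q0 0)))
      = adj (pmat NN sig) *\<^sub>v lv (\<lambda>u q y. \<Sum>c<M. qft M (-1) $$ (y,c) * (if fq S q y = q0 then ?s * Psi Orc A E q0 c u else 0))"
    unfolding circ_def run_circ_append v1 v2 v3 ..
  hence "run_circ NN Orc (circ A E S) (unit_vec NN (sig (Lidx 0 q0 0))) $ sig (Lidx u (q0 + b) y)
      = (\<Sum>c<M. qft M (-1) $$ (y,c) * (if fq S (q0 + b) y = q0 then ?s * Psi Orc A E q0 c u else 0))"
    using final_idx[OF lv_dim h(1) qb h(2)] lv_index[OF h(1) qb h(2)] by simp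
  also have "\<dots> = (if (b = 1) = (y \<in> S) then Vout Orc A E q0 y u else 0)"
  proof -
    have "(fq S (q0 + b) y = q0) = ((b = 1) = (y \<in> S))"
      using h(3) q0(2) unfolding fq_def by (cases b) auto
    thus ?thesis unfolding Vout_def by simp
  qed
  finally show "run_circ NN Orc (circ A E S) (unit_vec NN (sig (Lidx 0 q0 0))) $ sig (Lidx u (q0 + b) y)
       = (if (b = 1) = (y \<in> S) then Vout Orc A E q0 y u else 0)" .
qed

end


fun alf :: "real \<Rightarrow> nat \<Rightarrow> real \<times> real" where
  "alf p 0 = (1, 1)"
| "alf p (Suc n) = (let (al, be) = alf p n in (al * (1 - 2 * p) + 2 * be * (1 - p), - 2 * al * p + be * (1 - 2 * p)))"

context lay begin

lemma QopG_cong: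
  assumes "\<And>u. u < d \<Longrightarrow> \<phi> u = \<phi>' u"
  shows "QopG Orc A E q \<phi> u = QopG Orc A E q \<phi>' u"
  unfolding QopG_def using assms by (intro sum.cong refl arg_cong2[where f="(*)"]) auto

lemma cnorm: "complex_of_real ((cmod z)\<^sup>2) = cnj z * z"
  using complex_norm_square[of z] by (simp add: mult.commute)

definition gp :: "complex mat \<Rightarrow> nat \<Rightarrow> nat \<Rightarrow> nat \<Rightarrow> complex" where
  "gp Orc A x u = (if u div A = x then Orc $$ (u,0) else 0)"
definition bp :: "complex mat \<Rightarrow> nat \<Rightarrow> nat \<Rightarrow> nat \<Rightarrow> complex" where
  "bp Orc A x u = (if u div A = x then 0 else Orc $$ (u,0))"
definition pg :: "complex mat \<Rightarrow> nat \<Rightarrow> nat \<Rightarrow> real" where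
  "pg Orc A x = (\<Sum>u<d. (cmod (gp Orc A x u))\<^sup>2)"

lemma norm1:
  assumes U: "is_unitary d Orc"
  shows "(\<Sum>u<d. (cmod (gp Orc A x u))\<^sup>2) + (\<Sum>u<d. (cmod (bp Orc A x u))\<^sup>2) = 1"
proof -
  have "(\<Sum>u<d. (cmod (gp Orc A x u))\<^sup>2) + (\<Sum>u<d. (cmod (bp Orc A x u))\<^sup>2) = (\<Sum>u<d. (cmod (Orc $$ (u,0)))\<^sup>2)"
    unfolding sum.distrib[symmetric] by (rule sum.cong) (auto simp: gp_def bp_def)
  also have "complex_of_real \<dots> = (\<Sum>u<d. cnj (Orc $$ (u,0)) * Orc $$ (u,0))"
    unfolding of_real_sum by (rule sum.cong) (simp_all only: cnorm)
  also have "\<dots> = 1" using unitary_cols[OF U dpos dpos] by simp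
  finally show ?thesis by (metis of_real_eq_1_iff)
qed

lemma inner_g:
  "(\<Sum>u<d. cnj (Orc $$ (u,0)) * gp Orc A x u) = complex_of_real (pg Orc A x)"
  unfolding pg_def of_real_sum
  by (rule sum.cong) (auto simp del: of_real_power simp add: gp_def cnorm)

lemma inner_b:
  assumes U: "is_unitary d Orc"
  shows "(\<Sum>u<d. cnj (Orc $$ (u,0)) * bp Orc A x u) = complex_of_real (1 - pg Orc A x)"
proof -
  have "(\<Sum>u<d. cnj (Orc $$ (u,0)) * bp Orc A x u) = complex_of_real (\<Sum>u<d. (cmod (bp Orc A x u))\<^sup>2)"
    unfolding of_real_sum by (rule sum.cong) (auto simp del: of_real_power simp add: bp_def cnorm)
  also have "(\<Sum>u<d. (cmod (bp Orc A x u))\<^sup>2) = 1 - pg Orc A x" using norm1[OF U, of A x] unfolding pg_def by simp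
  finally show ?thesis .
qed

lemma grover_step:
  assumes U: "is_unitary d Orc" and x: "x = q div (2*E)" and u: "u < d"
  shows "QopG Orc A E q (\<lambda>u. complex_of_real al * gp Orc A x u + complex_of_real be * bp Orc A x u) u
       = complex_of_real (al * (1 - 2 * pg Orc A x) + 2 * be * (1 - pg Orc A x)) * gp Orc A x u
         + complex_of_real (- 2 * al * pg Orc A x + be * (1 - 2 * pg Orc A x)) * bp Orc A x u"
proof -
  let ?g = "gp Orc A x" and ?b = "bp Orc A x" and ?p = "pg Orc A x"
  define w where "w u2 = - complex_of_real al * ?g u2 + complex_of_real be * ?b u2" for u2
  define Y where "Y u1 = (\<Sum>u2<d. cnj (Orc $$ (u2,u1)) * w u2)" for u1
  have wq: "\<And>u2. (if u2 div A = q div (2*E) then -1 else 1) * (complex_of_real al * ?g u2 + complex_of_real be * ?b u2) = w u2"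
    unfolding w_def x gp_def bp_def by auto
  have "QopG Orc A E q (\<lambda>u. complex_of_real al * ?g u + complex_of_real be * ?b u) u
       = (\<Sum>u1<d. Orc $$ (u,u1) * (if u1 \<noteq> 0 then -1 else 1) * Y u1)"
  proof -
    have inner: "\<And>u1. (\<Sum>u2<d. cnj (Orc $$ (u2,u1)) * (if u2 div A = q div (2*E) then -1 else 1) *
        (complex_of_real al * ?g u2 + complex_of_real be * ?b u2)) = Y u1"
      unfolding Y_def by (rule sum.cong) (simp_all only: mult.assoc wq)
    show ?thesis by (simp only: QopG_def inner)
  qed
  also have "\<dots> = (\<Sum>u1<d. (if u1 = 0 then 2 * Orc $$ (u,0) * Y 0 else 0) - Orc $$ (u,u1) * Y u1)"
    by (rule sum.cong) auto
  also have "\<dots> = 2 * Orc $$ (u,0) * Y 0 - (\<Sum>u1<d. Orc $$ (u,u1) * Y u1)"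
    using dpos by (simp add: sum_subtractf)
  also have "(\<Sum>u1<d. Orc $$ (u,u1) * Y u1) = w u"
    unfolding Y_def by (rule unitary_id_sum[OF U u])
  also have "Y 0 = - complex_of_real al * complex_of_real ?p + complex_of_real be * complex_of_real (1 - ?p)"
  proof -
    have "Y 0 = - complex_of_real al * (\<Sum>u2<d. cnj (Orc $$ (u2,0)) * ?g u2) + complex_of_real be * (\<Sum>u2<d. cnj (Orc $$ (u2,0)) * ?b u2)"
    proof -
      have "Y 0 = (\<Sum>u2<d. - complex_of_real al * (cnj (Orc $$ (u2,0)) * ?g u2) + complex_of_real be * (cnj (Orc $$ (u2,0)) * ?b u2))"
        unfolding Y_def w_def by (rule sum.cong) (simp_all add: algebra_simps)
      also have "\<dots> = - complex_of_real al * (\<Sum>u2<d. cnj (Orc $$ (u2,0)) * ?g u2) + complex_of_real be * (\<Sum>u2<d. cnj (Orc $$ (u2,0)) * ?b u2)"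
        by (simp only: sum.distrib sum_distrib_left)
      finally show ?thesis .
    qed
    thus ?thesis by (simp add: inner_g inner_b[OF U])
  qed
  also have "Orc $$ (u,0) = ?g u + ?b u" unfolding gp_def bp_def by simp
  finally show ?thesis unfolding w_def by (simp add: algebra_simps)
qed

lemma Psi_decomp:
  assumes U: "is_unitary d Orc" and x: "x = q0 div (2*E)"
  shows "u < d \<Longrightarrow> Psi Orc A E q0 n u = complex_of_real (fst (alf (pg Orc A x) n)) * gp Orc A x u
                          + complex_of_real (snd (alf (pg Orc A x) n)) * bp Orc A x u"
proof (induction n arbitrary: u)
  case 0
  thus ?case unfolding Psi_def gp_def bp_def by simp
next
  case (Suc n)
  obtain al be where ab: "alf (pg Orc A x) n = (al, be)" by (cases "alf (pg Orc A x) n")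
  have "Psi Orc A E q0 (Suc n) u = QopG Orc A E q0 (Psi Orc A E q0 n) u" unfolding Psi_def by simp
  also have "\<dots> = QopG Orc A E q0 (\<lambda>u. complex_of_real al * gp Orc A x u + complex_of_real be * bp Orc A x u) u"
    by (rule QopG_cong) (use Suc.IH ab in simp)
  also have "\<dots> = complex_of_real (al * (1 - 2 * pg Orc A x) + 2 * be * (1 - pg Orc A x)) * gp Orc A x u
         + complex_of_real (- 2 * al * pg Orc A x + be * (1 - 2 * pg Orc A x)) * bp Orc A x u"
    by (rule grover_step[OF U x Suc.prems])
  finally show ?case using ab by simp
qed

end


lemma parallelogram: "(cmod (a + b))\<^sup>2 + (cmod (a - b))\<^sup>2 = 2 * (cmod a)\<^sup>2 + 2 * (cmod b)\<^sup>2"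
  unfolding cmod_power2 by (simp add: power2_eq_square algebra_simps)

lemma cmod_sum_cnj: "cmod (\<Sum>c<M. cis (- (real c * b))) = cmod (\<Sum>c<M. cis (real c * b))"
proof -
  have "(\<Sum>c<M. cis (- (real c * b))) = cnj (\<Sum>c<M. cis (real c * b))" by (simp add: cis_cnj)
  thus ?thesis by (metis complex_mod_cnj)
qed

lemma fourier_pair:
  fixes b t :: real
  shows "(cmod (\<Sum>c<M. cis (- (b * real c)) * complex_of_real (sin ((2 * real c + 1) * t))))\<^sup>2
       + (cmod (\<Sum>c<M. cis (- (b * real c)) * complex_of_real (cos ((2 * real c + 1) * t))))\<^sup>2
       = ((cmod (\<Sum>c<M. cis (real c * (2 * t - b))))\<^sup>2 + (cmod (\<Sum>c<M. cis (real c * (2 * t + b))))\<^sup>2) / 2"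
proof -
  let ?X = "\<Sum>c<M. cis (- (b * real c)) * complex_of_real (sin ((2 * real c + 1) * t))"
  let ?Y = "\<Sum>c<M. cis (- (b * real c)) * complex_of_real (cos ((2 * real c + 1) * t))"
  have e1: "?Y + \<i> * ?X = cis t * (\<Sum>c<M. cis (real c * (2 * t - b)))"
  proof -
    have "?Y + \<i> * ?X = (\<Sum>c<M. cis (- (b * real c)) * (complex_of_real (cos ((2 * real c + 1) * t)) + \<i> * complex_of_real (sin ((2 * real c + 1) * t))))"
      by (simp add: sum.distrib sum_distrib_left algebra_simps)
    also have "\<dots> = (\<Sum>c<M. cis t * cis (real c * (2 * t - b)))"
    proof (rule sum.cong)
      fix c assume "c \<in> {..<M}"
      have "complex_of_real (cos ((2 * real c + 1) * t)) + \<i> * complex_of_real (sin ((2 * real c + 1) * t)) = cis ((2 * real c + 1) * t)"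
        by (simp add: complex_eq_iff)
      hence "cis (- (b * real c)) * (complex_of_real (cos ((2 * real c + 1) * t)) + \<i> * complex_of_real (sin ((2 * real c + 1) * t)))
           = cis (- (b * real c) + (2 * real c + 1) * t)" by (simp add: cis_mult)
      also have "\<dots> = cis t * cis (real c * (2 * t - b))" by (simp add: cis_mult algebra_simps)
      finally show "cis (- (b * real c)) * (complex_of_real (cos ((2 * real c + 1) * t)) + \<i> * complex_of_real (sin ((2 * real c + 1) * t)))
           = cis t * cis (real c * (2 * t - b))" .
    qed simp
    finally show ?thesis by (simp add: sum_distrib_left)
  qed
  have e2: "?Y - \<i> * ?X = cis (- t) * (\<Sum>c<M. cis (- (real c * (2 * t + b))))"
  proof -
    have "?Y - \<i> * ?X = (\<Sum>c<M. cis (- (b * real c)) * (complex_of_real (cos ((2 * real c + 1) * t)) - \<i> * complex_of_real (sin ((2 * real c + 1) * t))))"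
      by (simp add: sum_subtractf sum_distrib_left algebra_simps)
    also have "\<dots> = (\<Sum>c<M. cis (- t) * cis (- (real c * (2 * t + b))))"
    proof (rule sum.cong)
      fix c assume "c \<in> {..<M}"
      have "complex_of_real (cos ((2 * real c + 1) * t)) - \<i> * complex_of_real (sin ((2 * real c + 1) * t)) = cis (- ((2 * real c + 1) * t))"
        by (simp add: complex_eq_iff)
      hence "cis (- (b * real c)) * (complex_of_real (cos ((2 * real c + 1) * t)) - \<i> * complex_of_real (sin ((2 * real c + 1) * t)))
           = cis (- (b * real c) + - ((2 * real c + 1) * t))" by (simp add: cis_mult)
      also have "\<dots> = cis (- t) * cis (- (real c * (2 * t + b)))" by (simp add: cis_mult algebra_simps)
      finally show "cis (- (b * real c)) * (complex_of_real (cos ((2 * real c + 1) * t)) - \<i> * complex_of_real (sin ((2 * real c + 1) * t)))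
           = cis (- t) * cis (- (real c * (2 * t + b)))" .
    qed simp
    finally show ?thesis by (simp add: sum_distrib_left)
  qed
  have "(cmod (?Y + \<i> * ?X))\<^sup>2 + (cmod (?Y - \<i> * ?X))\<^sup>2 = 2 * (cmod ?Y)\<^sup>2 + 2 * (cmod ?X)\<^sup>2"
    using parallelogram[of ?Y "\<i> * ?X"] by (simp add: norm_mult)
  moreover have "cmod (?Y + \<i> * ?X) = cmod (\<Sum>c<M. cis (real c * (2 * t - b)))" unfolding e1 by (simp add: norm_mult)
  moreover have "cmod (?Y - \<i> * ?X) = cmod (\<Sum>c<M. cis (real c * (2 * t + b)))"
    unfolding e2 by (simp add: norm_mult cmod_sum_cnj)
  ultimately show ?thesis by simp
qed

lemma alf_closed:
  assumes "p = (sin t)\<^sup>2" "1 - p = (cos t)\<^sup>2"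
  shows "sin t * fst (alf p n) = sin ((2 * real n + 1) * t) \<and> cos t * snd (alf p n) = cos ((2 * real n + 1) * t)"
proof (induction n)
  case 0 thus ?case by simp
next
  case (Suc n)
  obtain al be where ab: "alf p n = (al, be)" by (cases "alf p n")
  have A: "sin t * al = sin ((2 * real n + 1) * t)" and B: "cos t * be = cos ((2 * real n + 1) * t)"
    using Suc ab by auto
  let ?f = "(2 * real n + 1) * t"
  have s2: "sin (2*t) = 2 * sin t * cos t" by (rule sin_double)
  have c2: "cos (2*t) = 1 - 2 * p" using assms(1) cos_double_sin[of t] by simp
  have "(2 * real (Suc n) + 1) * t = ?f + 2 * t" by (simp add: algebra_simps)
  hence e: "sin ((2 * real (Suc n) + 1) * t) = sin ?f * cos (2*t) + cos ?f * sin (2*t)"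
           "cos ((2 * real (Suc n) + 1) * t) = cos ?f * cos (2*t) - sin ?f * sin (2*t)"
    by (simp_all add: sin_add cos_add)
  have "sin t * (al * (1 - 2 * p) + 2 * be * (1 - p)) = sin ((2 * real (Suc n) + 1) * t)"
    unfolding e c2 s2 A[symmetric] B[symmetric] assms(2) by (simp add: algebra_simps power2_eq_square)
  moreover have "cos t * (- 2 * al * p + be * (1 - 2 * p)) = cos ((2 * real (Suc n) + 1) * t)"
    unfolding e c2 s2 A[symmetric] B[symmetric] assms(1) by (simp add: algebra_simps power2_eq_square)
  ultimately show ?case using ab by simp
qed


context lay begin

lemma qft_entry: "y < M \<Longrightarrow> c < M \<Longrightarrow>
  complex_of_real (1 / sqrt (real M)) * qft M (-1) $$ (y,c) = cis (- (2 * pi * real y / real M * real c)) / of_nat M"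
proof -
  assume h: "y < M" "c < M"
  have sq: "complex_of_real (sqrt (real M)) * complex_of_real (sqrt (real M)) = of_nat M"
  proof -
    have "complex_of_real (sqrt (real M)) * complex_of_real (sqrt (real M)) = complex_of_real (sqrt (real M) * sqrt (real M))"
      by (simp only: of_real_mult)
    also have "sqrt (real M) * sqrt (real M) = real M" by simp
    finally show ?thesis by simp
  qed
  have "-1 * 2 * pi * real y * real c / real M = - (2 * pi * real y / real M * real c)" by simp
  hence "qft M (-1) $$ (y,c) = cis (- (2 * pi * real y / real M * real c)) / complex_of_real (sqrt (real M))"
    unfolding qft_def using h by simp
  thus ?thesis using sq by (simp add: field_simps)
qed

lemma prob_y:
  assumes U: "is_unitary d Orc" and x: "x = q0 div (2*E)" and y: "y < M"
    and th: "pg Orc A x = (sin t)\<^sup>2" "1 - pg Orc A x = (cos t)\<^sup>2" "0 \<le> sin t" "0 \<le> cos t"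
  shows "(\<Sum>u<d. (cmod (Vout Orc A E q0 y u))\<^sup>2) = (Kf M (2 * t - 2 * pi * real y / real M) + Kf M (2 * t + 2 * pi * real y / real M)) / 2"
proof -
  let ?p = "pg Orc A x"
  let ?b = "2 * pi * real y / real M"
  let ?z = "\<lambda>c. cis (- (?b * real c)) / of_nat M"
  let ?al = "\<lambda>c. fst (alf ?p c)" and ?be = "\<lambda>c. snd (alf ?p c)"
  define X where "X = (\<Sum>c<M. ?z c * complex_of_real (?al c))"
  define Y where "Y = (\<Sum>c<M. ?z c * complex_of_real (?be c))"
  have V: "Vout Orc A E q0 y u = X * gp Orc A x u + Y * bp Orc A x u" if u: "u < d" for u
  proof -
    have "Vout Orc A E q0 y u = (\<Sum>c<M. ?z c * (complex_of_real (?al c) * gp Orc A x u + complex_of_real (?be c) * bp Orc A x u))"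
      unfolding Vout_def
    proof (rule sum.cong)
      fix c assume "c \<in> {..<M}"
      hence c: "c < M" by simp
      have "qft M (-1) $$ (y,c) * (complex_of_real (1 / sqrt (real M)) * Psi Orc A E q0 c u)
          = (complex_of_real (1 / sqrt (real M)) * qft M (-1) $$ (y,c)) * Psi Orc A E q0 c u" by (simp only: ac_simps)
      also have "\<dots> = ?z c * (complex_of_real (?al c) * gp Orc A x u + complex_of_real (?be c) * bp Orc A x u)"
        unfolding qft_entry[OF y c] Psi_decomp[OF U x u] by (simp add: mult.commute)
      finally show "qft M (-1) $$ (y,c) * (complex_of_real (1 / sqrt (real M)) * Psi Orc A E q0 c u)
          = ?z c * (complex_of_real (?al c) * gp Orc A x u + complex_of_real (?be c) * bp Orc A x u)" .
    qed simp
    also have "\<dots> = X * gp Orc A x u + Y * bp Orc A x u"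
      unfolding X_def Y_def by (simp only: sum_distrib_right distrib_left sum.distrib mult.assoc)
    finally show ?thesis .
  qed
  have "(\<Sum>u<d. (cmod (Vout Orc A E q0 y u))\<^sup>2) = (\<Sum>u<d. (cmod X)\<^sup>2 * (cmod (gp Orc A x u))\<^sup>2 + (cmod Y)\<^sup>2 * (cmod (bp Orc A x u))\<^sup>2)"
  proof (rule sum.cong)
    fix u assume "u \<in> {..<d}"
    thus "(cmod (Vout Orc A E q0 y u))\<^sup>2 = (cmod X)\<^sup>2 * (cmod (gp Orc A x u))\<^sup>2 + (cmod Y)\<^sup>2 * (cmod (bp Orc A x u))\<^sup>2"
      using V by (auto simp: gp_def bp_def norm_mult power_mult_distrib)
  qed simp
  also have "\<dots> = (cmod X)\<^sup>2 * ?p + (cmod Y)\<^sup>2 * (1 - ?p)"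
  proof -
    have "(\<Sum>u<d. (cmod (bp Orc A x u))\<^sup>2) = 1 - ?p" using norm1[OF U, of A x] unfolding pg_def by simp
    thus ?thesis unfolding pg_def by (simp add: sum.distrib sum_distrib_left[symmetric])
  qed
  also have "(cmod X)\<^sup>2 * ?p = (cmod (X * complex_of_real (sin t)))\<^sup>2"
    using th by (simp add: norm_mult power_mult_distrib)
  also have "X * complex_of_real (sin t) = (\<Sum>c<M. cis (- (?b * real c)) * complex_of_real (sin ((2 * real c + 1) * t))) / of_nat M"
    unfolding X_def sum_distrib_right sum_divide_distrib
  proof (rule sum.cong)
    fix c
    have "sin t * ?al c = sin ((2 * real c + 1) * t)" using alf_closed[OF th(1,2)] by blast
    thus "?z c * complex_of_real (?al c) * complex_of_real (sin t) = cis (- (?b * real c)) * complex_of_real (sin ((2 * real c + 1) * t)) / of_nat M"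
      by (simp add: mult.commute mult.left_commute flip: of_real_mult)
  qed simp
  also have "(cmod Y)\<^sup>2 * (1 - ?p) = (cmod (Y * complex_of_real (cos t)))\<^sup>2"
    using th by (simp add: norm_mult power_mult_distrib)
  also have "Y * complex_of_real (cos t) = (\<Sum>c<M. cis (- (?b * real c)) * complex_of_real (cos ((2 * real c + 1) * t))) / of_nat M"
    unfolding Y_def sum_distrib_right sum_divide_distrib
  proof (rule sum.cong)
    fix c
    have "cos t * ?be c = cos ((2 * real c + 1) * t)" using alf_closed[OF th(1,2)] by blast
    thus "?z c * complex_of_real (?be c) * complex_of_real (cos t) = cis (- (?b * real c)) * complex_of_real (cos ((2 * real c + 1) * t)) / of_nat M"
      by (simp add: mult.commute mult.left_commute flip: of_real_mult)
  qed simp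
  also have "(cmod ((\<Sum>c<M. cis (- (?b * real c)) * complex_of_real (sin ((2 * real c + 1) * t))) / of_nat M))\<^sup>2
        + (cmod ((\<Sum>c<M. cis (- (?b * real c)) * complex_of_real (cos ((2 * real c + 1) * t))) / of_nat M))\<^sup>2
      = ((cmod (\<Sum>c<M. cis (- (?b * real c)) * complex_of_real (sin ((2 * real c + 1) * t))))\<^sup>2
        + (cmod (\<Sum>c<M. cis (- (?b * real c)) * complex_of_real (cos ((2 * real c + 1) * t))))\<^sup>2) / (real M)^2"
    by (simp add: norm_divide power_divide add_divide_distrib)
  also have "\<dots> = (Kf M (2 * t - ?b) + Kf M (2 * t + ?b)) / 2"
    unfolding fourier_pair Kf_def by (simp add: add_divide_distrib)
  finally show ?thesis .
qed

end


lemma cis_shift: "cis (real c * (b + 2 * pi * of_int j)) = cis (real c * b)"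
proof -
  have e1: "real c * (b + 2 * pi * of_int j) = real c * b + 2 * pi * of_int (int c * j)" by (simp add: algebra_simps)
  have e2: "cis (real c * b + 2 * pi * of_int (int c * j)) = cis (real c * b) * cis (2 * pi * of_int (int c * j))"
    by (rule cis_mult[symmetric])
  have "cis (real c * (b + 2 * pi * of_int j)) = cis (real c * b) * cis (2 * pi * of_int (int c * j))"
    unfolding e1 e2 ..
  also have "cis (2 * pi * real_of_int (int c * j)) = 1" by (rule cis_multiple_2pi) simp
  finally show ?thesis by simp
qed

lemma Kf_shift: "Kf M (b + 2 * pi * of_int j) = Kf M b"
  unfolding Kf_def by (simp only: cis_shift)

lemma Kf_neg: "Kf M (- b) = Kf M b"
proof -
  have "(\<Sum>c<M. cis (real c * - b)) = cnj (\<Sum>c<M. cis (real c * b))" by (simp add: cis_cnj)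
  thus ?thesis unfolding Kf_def by (metis complex_mod_cnj)
qed

lemma mod_distinct4:
  fixes k :: int and M :: nat
  assumes "4 \<le> M" "n1 \<in> {-1,0,1,2}" "n2 \<in> {-1,0,1,2}" "(k + n1) mod int M = (k + n2) mod int M"
  shows "n1 = n2"
proof -
  have "int M dvd (k + n1) - (k + n2)" using assms(4) by (simp add: mod_eq_dvd_iff)
  hence "int M dvd n1 - n2" by simp
  moreover have "\<bar>n1 - n2\<bar> < int M" using assms(1-3) by auto
  ultimately show ?thesis using dvd_imp_le_int[of "n1 - n2" "int M"] by (cases "n1 - n2 = 0") auto
qed

lemma mod_distinct4':
  fixes k :: int and M :: nat
  assumes "4 \<le> M" "n1 \<in> {-1,0,1,2}" "n2 \<in> {-1,0,1,2}" "(- (k + n1)) mod int M = (- (k + n2)) mod int M"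
  shows "n1 = n2"
proof -
  have "int M dvd (- (k + n1)) - (- (k + n2))" using assms(4) by (simp add: mod_eq_dvd_iff)
  hence "int M dvd n2 - n1" by simp
  moreover have "\<bar>n2 - n1\<bar> < int M" using assms(1-3) by auto
  ultimately show ?thesis using dvd_imp_le_int[of "n2 - n1" "int M"] by (cases "n2 - n1 = 0") auto
qed

definition kk :: "nat \<Rightarrow> real \<Rightarrow> int" where "kk M t = \<lfloor>real M * t / pi\<rfloor>"
definition yv :: "nat \<Rightarrow> real \<Rightarrow> int \<Rightarrow> nat" where "yv M t n = nat ((kk M t + n) mod int M)"
definition zv :: "nat \<Rightarrow> real \<Rightarrow> int \<Rightarrow> nat" where "zv M t n = nat ((- (kk M t + n)) mod int M)"

lemma yv_lt: "0 < M \<Longrightarrow> yv M t n < M" unfolding yv_def by (simp add: nat_less_iff)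
lemma zv_lt: "0 < M \<Longrightarrow> zv M t n < M" unfolding zv_def by (simp add: nat_less_iff)

lemma yv_angle:
  assumes "0 < M"
  shows "2 * t - 2 * pi * real (yv M t n) / real M
     = 2 * pi * ((real M * t / pi - of_int (kk M t)) - of_int n) / real M + 2 * pi * of_int ((kk M t + n) div int M)"
proof -
  have e: "real (yv M t n) = of_int (kk M t + n) - real M * of_int ((kk M t + n) div int M)"
  proof -
    have "int (yv M t n) = (kk M t + n) mod int M" unfolding yv_def using assms by simp
    also have "\<dots> = (kk M t + n) - int M * ((kk M t + n) div int M)" by (simp add: minus_div_mult_eq_mod[symmetric])
    finally have "int (yv M t n) = (kk M t + n) - int M * ((kk M t + n) div int M)" .
    hence "real_of_int (int (yv M t n)) = real_of_int ((kk M t + n) - int M * ((kk M t + n) div int M))" by simp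
    thus ?thesis by simp
  qed
  show ?thesis unfolding e using assms by (simp add: field_simps)
qed

lemma zv_angle:
  assumes "0 < M"
  shows "2 * t + 2 * pi * real (zv M t n) / real M
     = 2 * pi * ((real M * t / pi - of_int (kk M t)) - of_int n) / real M + 2 * pi * of_int (- ((- (kk M t + n)) div int M))"
proof -
  have e: "real (zv M t n) = - of_int (kk M t + n) - real M * of_int ((- (kk M t + n)) div int M)"
  proof -
    have "int (zv M t n) = (- (kk M t + n)) mod int M" unfolding zv_def using assms by simp
    also have "\<dots> = (- (kk M t + n)) - int M * ((- (kk M t + n)) div int M)" by (simp add: minus_div_mult_eq_mod[symmetric])
    finally have "int (zv M t n) = (- (kk M t + n)) - int M * ((- (kk M t + n)) div int M)" .
    hence "real_of_int (int (zv M t n)) = real_of_int ((- (kk M t + n)) - int M * ((- (kk M t + n)) div int M))" by simp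
    thus ?thesis by simp
  qed
  show ?thesis unfolding e using assms by (simp add: field_simps)
qed


lemma window:
  fixes M :: nat and t :: real and U :: "nat set"
  assumes M: "4 \<le> M" and t: "0 \<le> t" and UM: "U \<subseteq> {..<M}"
    and T: "\<And>n. n \<in> {-1,0,1,2::int} \<Longrightarrow> yv M t n \<in> U \<and> zv M t n \<in> U"
  shows "(\<Sum>y\<in>U. (Kf M (2 * t - 2 * pi * real y / real M) + Kf M (2 * t + 2 * pi * real y / real M)) / 2) \<ge> 8 / pi^2"
proof -
  have M0: "0 < M" using M by simp
  have fU: "finite U" using UM finite_subset by blast
  define dl where "dl = real M * t / pi - of_int (kk M t)"
  have dl: "0 \<le> dl" "dl < 1" unfolding dl_def kk_def by linarith+
  let ?K1 = "\<lambda>y::nat. Kf M (2 * t - 2 * pi * real y / real M)"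
  let ?K2 = "\<lambda>y::nat. Kf M (2 * t + 2 * pi * real y / real M)"
  let ?N = "{-1,0,1,2::int}"
  have k1: "?K1 (yv M t n) = Kf M (2 * pi * (dl - of_int n) / real M)" for n
    unfolding yv_angle[OF M0] dl_def by (rule Kf_shift)
  have k2: "?K2 (zv M t n) = Kf M (2 * pi * (dl - of_int n) / real M)" for n
    unfolding zv_angle[OF M0] dl_def by (rule Kf_shift)
  have injy: "inj_on (yv M t) ?N"
  proof (rule inj_onI)
    fix n1 n2 assume h: "n1 \<in> ?N" "n2 \<in> ?N" "yv M t n1 = yv M t n2"
    hence "(kk M t + n1) mod int M = (kk M t + n2) mod int M" unfolding yv_def using M0
      by (metis nat_eq_iff2 pos_mod_sign of_nat_0_less_iff)
    thus "n1 = n2" using mod_distinct4[OF M h(1,2)] by blast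
  qed
  have injz: "inj_on (zv M t) ?N"
  proof (rule inj_onI)
    fix n1 n2 assume h: "n1 \<in> ?N" "n2 \<in> ?N" "zv M t n1 = zv M t n2"
    hence "(- (kk M t + n1)) mod int M = (- (kk M t + n2)) mod int M" unfolding zv_def using M0
      by (metis nat_eq_iff2 pos_mod_sign of_nat_0_less_iff)
    thus "n1 = n2" using mod_distinct4'[OF M h(1,2)] by blast
  qed
  have F: "(\<Sum>n\<in>?N. Kf M (2 * pi * (dl - of_int n) / real M)) \<ge> 8 / pi^2"
    using fejer4[OF M0 dl] by (simp add: add.assoc)
  have S1: "(\<Sum>y\<in>U. ?K1 y) \<ge> 8 / pi^2"
  proof -
    have "(\<Sum>y\<in>U. ?K1 y) \<ge> (\<Sum>y\<in>yv M t ` ?N. ?K1 y)"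
      by (rule sum_mono2[OF fU]) (use T in \<open>auto simp: Kf_nonneg\<close>)
    also have "(\<Sum>y\<in>yv M t ` ?N. ?K1 y) = (\<Sum>n\<in>?N. ?K1 (yv M t n))" by (rule sum.reindex[OF injy, unfolded comp_def])
    also have "\<dots> = (\<Sum>n\<in>?N. Kf M (2 * pi * (dl - of_int n) / real M))" by (simp only: k1)
    finally show ?thesis using F by linarith
  qed
  have S2: "(\<Sum>y\<in>U. ?K2 y) \<ge> 8 / pi^2"
  proof -
    have "(\<Sum>y\<in>U. ?K2 y) \<ge> (\<Sum>y\<in>zv M t ` ?N. ?K2 y)"
      by (rule sum_mono2[OF fU]) (use T in \<open>auto simp: Kf_nonneg\<close>)
    also have "(\<Sum>y\<in>zv M t ` ?N. ?K2 y) = (\<Sum>n\<in>?N. ?K2 (zv M t n))" by (rule sum.reindex[OF injz, unfolded comp_def])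
    also have "\<dots> = (\<Sum>n\<in>?N. Kf M (2 * pi * (dl - of_int n) / real M))" by (simp only: k2)
    finally show ?thesis using F by linarith
  qed
  have "(\<Sum>y\<in>U. (?K1 y + ?K2 y) / 2) = (\<Sum>y\<in>U. ?K1 y) / 2 + (\<Sum>y\<in>U. ?K2 y) / 2"
    by (simp add: sum.distrib sum_divide_distrib add_divide_distrib)
  thus ?thesis using S1 S2 by linarith
qed


lemma sin_sq_lip: "\<bar>(sin (a::real))\<^sup>2 - (sin b)\<^sup>2\<bar> \<le> \<bar>a - b\<bar>"
proof -
  have "(sin a)\<^sup>2 - (sin b)\<^sup>2 = (cos (2*b) - cos (2*a)) / 2"
    by (simp add: cos_double_sin)
  also have "cos (2*b) - cos (2*a) = 2 * sin ((2*b + 2*a)/2) * sin ((2*a - 2*b)/2)" by (rule cos_diff_cos)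
  finally have e: "(sin a)\<^sup>2 - (sin b)\<^sup>2 = 2 * sin ((2 * b + 2 * a) / 2) * sin ((2 * a - 2 * b) / 2) / 2" .
  have q1: "(2*b + 2*a)/2 = a + b" and q2: "(2*a - 2*b)/2 = a - b" by simp_all
  have "(sin a)\<^sup>2 - (sin b)\<^sup>2 = sin (a + b) * sin (a - b)" using e unfolding q1 q2 by simp
  hence "\<bar>(sin a)\<^sup>2 - (sin b)\<^sup>2\<bar> = \<bar>sin (a + b)\<bar> * \<bar>sin (a - b)\<bar>" by (simp add: abs_mult)
  also have "\<dots> \<le> 1 * \<bar>a - b\<bar>"
    by (intro mult_mono abs_sin_x_le_abs_x) (auto simp: abs_sin_le_one)
  finally show ?thesis by simp
qed

lemma sin_sq_neg: "(sin (- y))\<^sup>2 = (sin (y::real))\<^sup>2" by simp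

lemma close_common:
  assumes M0: "0 < M" and n: "n \<in> {-1,0,1,2::int}" and dl: "0 \<le> dl" "dl < 1"
  shows "\<bar>(sin (t - pi * (dl - of_int n) / real M))\<^sup>2 - (sin t)\<^sup>2\<bar> \<le> 2 * pi / real M"
proof -
  have "\<bar>(sin (t - pi * (dl - of_int n) / real M))\<^sup>2 - (sin t)\<^sup>2\<bar> \<le> \<bar>pi * (dl - of_int n) / real M\<bar>"
    using sin_sq_lip[of "t - pi * (dl - of_int n) / real M" t] by simp
  also have "\<dots> = pi * \<bar>dl - of_int n\<bar> / real M" by (simp add: abs_mult)
  also have "\<dots> \<le> pi * 2 / real M" using n dl M0 by (intro divide_right_mono mult_left_mono) auto
  finally show ?thesis by (simp add: mult.commute)
qed

lemma yv_close:
  assumes M0: "0 < M" and n: "n \<in> {-1,0,1,2::int}"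
  shows "\<bar>(sin (pi * real (yv M t n) / real M))\<^sup>2 - (sin t)\<^sup>2\<bar> \<le> 2 * pi / real M"
proof -
  define dl where "dl = real M * t / pi - of_int (kk M t)"
  have dl: "0 \<le> dl" "dl < 1" unfolding dl_def kk_def by linarith+
  define D where "D = (kk M t + n) div int M"
  have "pi * real (yv M t n) / real M = (t - pi * (dl - of_int n) / real M) - pi * of_int D"
  proof -
    have e: "2 * t - 2 * pi * real (yv M t n) / real M = 2 * pi * (dl - of_int n) / real M + 2 * pi * of_int D"
      using yv_angle[OF M0, of t n] unfolding dl_def[symmetric] D_def[symmetric] .
    have "2 * pi * real (yv M t n) / real M = 2 * (pi * real (yv M t n) / real M)"
      "2 * pi * (dl - of_int n) / real M = 2 * (pi * (dl - of_int n) / real M)" by simp_all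
    thus ?thesis using e by linarith
  qed
  hence "(sin (pi * real (yv M t n) / real M))\<^sup>2 = (sin (t - pi * (dl - of_int n) / real M))\<^sup>2"
    by (simp only: sin_sq_shift)
  thus ?thesis using close_common[OF M0 n dl] by simp
qed

lemma zv_close:
  assumes M0: "0 < M" and n: "n \<in> {-1,0,1,2::int}"
  shows "\<bar>(sin (pi * real (zv M t n) / real M))\<^sup>2 - (sin t)\<^sup>2\<bar> \<le> 2 * pi / real M"
proof -
  define dl where "dl = real M * t / pi - of_int (kk M t)"
  have dl: "0 \<le> dl" "dl < 1" unfolding dl_def kk_def by linarith+
  define D where "D = - ((- (kk M t + n)) div int M)"
  have "pi * real (zv M t n) / real M = - (t - pi * (dl - of_int n) / real M) - pi * of_int (- D)"
  proof -
    have e: "2 * t + 2 * pi * real (zv M t n) / real M = 2 * pi * (dl - of_int n) / real M + 2 * pi * of_int D"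
      using zv_angle[OF M0, of t n] unfolding dl_def[symmetric] D_def[symmetric] .
    have "2 * pi * real (zv M t n) / real M = 2 * (pi * real (zv M t n) / real M)"
      "2 * pi * (dl - of_int n) / real M = 2 * (pi * (dl - of_int n) / real M)" by simp_all
    thus ?thesis using e by simp
  qed
  hence "(sin (pi * real (zv M t n) / real M))\<^sup>2 = (sin (- (t - pi * (dl - of_int n) / real M)))\<^sup>2"
    by (simp only: sin_sq_shift)
  also have "\<dots> = (sin (t - pi * (dl - of_int n) / real M))\<^sup>2" by (rule sin_sq_neg)
  finally show ?thesis using close_common[OF M0 n dl] by simp
qed


lemma Lbounds:
  fixes e :: real
  assumes "0 < e" "e \<le> 1"
  shows "1 / e \<le> 2 ^ nat \<lceil>log 2 (1/e)\<rceil>" "2 ^ nat \<lceil>log 2 (1/e)\<rceil> \<le> 2 / e"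
proof -
  let ?g = "log 2 (1/e)"
  have g0: "0 \<le> ?g" using assms by simp
  have c0: "0 \<le> \<lceil>?g\<rceil>" using g0 by simp
  have pw: "(2::real) ^ nat \<lceil>?g\<rceil> = 2 powr (of_int \<lceil>?g\<rceil>)"
    using powr_realpow[of 2 "nat \<lceil>?g\<rceil>"] c0 by simp
  have pg: "2 powr ?g = 1 / e" using assms by simp
  have "2 powr ?g \<le> 2 powr (of_int \<lceil>?g\<rceil>)" by (rule powr_mono) auto
  thus "1 / e \<le> 2 ^ nat \<lceil>?g\<rceil>" using pw pg by simp
  have "2 powr (of_int \<lceil>?g\<rceil>) \<le> 2 powr (?g + 1)" by (rule powr_mono) (use ceiling_correct[of ?g] in auto)
  also have "2 powr (?g + 1) = 2 * (1 / e)" using pg by (simp add: powr_add)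
  finally show "2 ^ nat \<lceil>?g\<rceil> \<le> 2 / e" using pw by simp
qed

lemma sum_grid:
  fixes g :: "nat \<Rightarrow> real"
  assumes "\<And>w. 0 \<le> g w" "M * d \<le> W"
  shows "(\<Sum>y<M. \<Sum>u<d. g (y * d + u)) \<le> (\<Sum>w<W. g w)"
proof -
  have "(\<Sum>y<M. \<Sum>u<d. g (y * d + u)) = (\<Sum>y<M. \<Sum>l<M*d. if l div d = y then g l else 0)"
    by (rule sum.cong) (simp_all add: sum_block)
  also have "\<dots> = (\<Sum>l<M*d. \<Sum>y<M. if l div d = y then g l else 0)" by (rule sum.swap)
  also have "\<dots> = (\<Sum>l<M*d. g l)"
  proof (rule sum.cong)
    fix l assume "l \<in> {..<M*d}"
    hence "l div d < M" by (simp add: less_mult_imp_div_less)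
    thus "(\<Sum>y<M. if l div d = y then g l else 0) = g l" by simp
  qed simp
  also have "\<dots> \<le> (\<Sum>w<W. g w)" by (rule sum_mono2) (use assms in auto)
  finally show ?thesis .
qed

theorem lemma8:
  "\<exists>C::real. 0 < C \<and>
    (\<forall>(n0::nat) (a::nat) (\<tau>::real) (\<epsilon>::real).
      0 < \<epsilon> \<and> \<epsilon> \<le> 1 \<longrightarrow>
      (let m = 2 ^ n0; r = n0 + a;
           l = nat \<lceil>log 2 (1 / \<epsilon>)\<rceil> + 8;
           W = 2 ^ (2 * l + r + 1);
           N = m * W * 2
       in \<exists>circ :: step list.
            list_all (step_ok N (2 ^ r)) circ \<and>
            real (num_queries circ) \<le> C / \<epsilon> \<and>
            (\<forall>Orc. is_unitary (2 ^ r) Orc \<longrightarrow>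
               (\<forall>x < m.
                  let out = run_circ N Orc circ (unit_vec N (x * (2 * W))) in
                  (outcome_prob a Orc x < \<tau> - \<epsilon> \<longrightarrow> meas_prob W out x 0 \<ge> 8 / pi\<^sup>2) \<and>
                  (outcome_prob a Orc x \<ge> \<tau> \<longrightarrow> meas_prob W out x 1 \<ge> 8 / pi\<^sup>2)))))"
proof (intro exI[of _ 1024] conjI allI impI)
  show "(0::real) < 1024" by simp
  fix n0 a :: nat and \<tau> \<epsilon> :: real
  assume eps: "0 < \<epsilon> \<and> \<epsilon> \<le> 1"
  define m :: nat where "m = 2 ^ n0"
  define r :: nat where "r = n0 + a"
  define L :: nat where "L = nat \<lceil>log 2 (1 / \<epsilon>)\<rceil>"
  define l :: nat where "l = L + 8"
  define W :: nat where "W = 2 ^ (2 * l + r + 1)"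
  define N :: nat where "N = m * W * 2"
  define d :: nat where "d = 2 ^ r"
  define A :: nat where "A = 2 ^ a"
  define M :: nat where "M = 2 ^ l"
  define E :: nat where "E = 2 ^ (l + 1)"
  define Q :: nat where "Q = m * (2 * E)"
  define S :: "nat set" where "S = {y. (sin (pi * real y / real M))\<^sup>2 \<ge> \<tau> - \<epsilon> / 2}"
  interpret L: lay d Q M
    by unfold_locales (auto simp: d_def Q_def M_def E_def m_def)
  have WE: "W = E * M * d" unfolding W_def E_def M_def d_def by (simp add: power_add[symmetric])
  have NN: "L.NN = N"
  proof -
    have "L.NN = d * (Q * M)" by (rule L.NN_def)
    also have "\<dots> = N" unfolding N_def Q_def WE by (simp add: algebra_simps)
    finally show ?thesis .
  qed
  have dmA: "d = m * A" unfolding d_def m_def A_def r_def by (simp add: power_add)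
  have Lb: "1 / \<epsilon> \<le> 2 ^ L" "2 ^ L \<le> 2 / \<epsilon>" using Lbounds[of \<epsilon>] eps unfolding L_def by auto
  have Mr: "real M = 2 ^ L * 256" unfolding M_def l_def by (simp add: power_add)
  have M4: "4 \<le> M" unfolding M_def l_def by (simp add: power_add)
  have Mbig: "2 * pi / real M < \<epsilon> / 2"
  proof -
    have "real M \<ge> 256 / \<epsilon>" using Lb(1) eps unfolding Mr by (simp add: field_simps)
    moreover have "0 < real M" using L.Mpos by simp
    ultimately have "2 * pi / real M \<le> 2 * pi / (256 / \<epsilon>)" using eps by (intro divide_left_mono) auto
    also have "\<dots> = pi * \<epsilon> / 128" by simp
    also have "\<dots> < \<epsilon> / 2" using eps pi_less_4 by (simp add: field_simps)
    finally show ?thesis .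
  qed
  let ?circ = "L.circ A E S"
  have "\<exists>circ :: step list. list_all (step_ok N (2 ^ r)) circ \<and>
            real (num_queries circ) \<le> 1024 / \<epsilon> \<and>
            (\<forall>Orc. is_unitary (2 ^ r) Orc \<longrightarrow>
               (\<forall>x < m.
                  let out = run_circ N Orc circ (unit_vec N (x * (2 * W))) in
                  (outcome_prob a Orc x < \<tau> - \<epsilon> \<longrightarrow> meas_prob W out x 0 \<ge> 8 / pi\<^sup>2) \<and>
                  (outcome_prob a Orc x \<ge> \<tau> \<longrightarrow> meas_prob W out x 1 \<ge> 8 / pi\<^sup>2)))"
  proof (intro exI[of _ ?circ] conjI allI impI)
    show "list_all (step_ok N (2 ^ r)) ?circ" using L.circ_ok[of A E S] unfolding NN by (simp add: d_def)
    show "real (num_queries ?circ) \<le> 1024 / \<epsilon>"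
    proof -
      have "real (num_queries ?circ) \<le> 2 * real M" unfolding L.nq_circ by simp
      also have "\<dots> = 512 * 2 ^ L" unfolding Mr by simp
      also have "\<dots> \<le> 512 * (2 / \<epsilon>)" using Lb(2) by simp
      finally show ?thesis by simp
    qed
    fix Orc :: "complex mat" and x :: nat
    assume U0: "is_unitary (2 ^ r) Orc" and xm: "x < m"
    have U: "is_unitary d Orc" using U0 unfolding d_def .
    define q0 where "q0 = 2 * (x * E)"
    have E0: "0 < E" unfolding E_def by simp
    have q0Q: "q0 < Q" unfolding q0_def Q_def using xm E0 by simp
    have q0e: "even q0" unfolding q0_def by simp
    have xq: "x = q0 div (2 * E)" unfolding q0_def using E0 by simp
    define out where "out = run_circ N Orc ?circ (unit_vec N (x * (2 * W)))"
    have sig0: "L.sig (L.Lidx 0 q0 0) = x * (2 * W)"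
      using L.sig_Lidx[OF q0Q L.Mpos] unfolding q0_def WE by (simp add: algebra_simps)
    have outv: "out = run_circ L.NN Orc ?circ (unit_vec L.NN (L.sig (L.Lidx 0 q0 0)))"
      unfolding out_def NN sig0 ..
    have out_idx: "out $ (x * (2 * W) + 2 * (y * d + u) + b) = (if (b = 1) = (y \<in> S) then L.Vout Orc A E q0 y u else 0)"
      if h: "u < d" "y < M" "b < 2" for u y b
    proof -
      have qb: "q0 + b < Q" using q0Q q0e h(3) L.Qeven by (cases b) (auto elim!: evenE)
      have s1: "L.sig (L.Lidx u (q0 + b) y) = ((((q0 + b) div 2) * M + y) * d + u) * 2 + (q0 + b) mod 2"
        by (rule L.sig_Lidx[OF qb h(2)])
      have s2: "(q0 + b) div 2 = x * E" "(q0 + b) mod 2 = b" unfolding q0_def using h(3) by auto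
      have "L.sig (L.Lidx u (q0 + b) y) = x * (2 * W) + 2 * (y * d + u) + b"
        unfolding s1 s2 WE by (simp add: algebra_simps)
      moreover have "out $ L.sig (L.Lidx u (q0 + b) y) = (if (b = 1) = (y \<in> S) then L.Vout Orc A E q0 y u else 0)"
        unfolding outv by (rule L.circ_out[OF U q0Q q0e h])
      ultimately show ?thesis by simp
    qed
    let ?p = "L.pg Orc A x"
    have pdef: "outcome_prob a Orc x = ?p"
    proof -
      have "?p = (\<Sum>u<d. if u div A = x then (cmod (Orc $$ (u,0)))\<^sup>2 else 0)"
        unfolding L.pg_def L.gp_def by (rule sum.cong) auto
      also have "\<dots> = (\<Sum>u<m*A. if u div A = x then (cmod (Orc $$ (u,0)))\<^sup>2 else 0)"
        by (simp only: dmA)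
      also have "\<dots> = (\<Sum>c<A. (cmod (Orc $$ (x * A + c, 0)))\<^sup>2)" by (rule sum_block[OF xm])
      finally show ?thesis unfolding outcome_prob_def A_def by (simp add: mult.commute)
    qed
    have p01: "0 \<le> ?p" "?p \<le> 1"
    proof -
      show "0 \<le> ?p" unfolding L.pg_def by (simp add: sum_nonneg)
      have "0 \<le> (\<Sum>u<d. (cmod (L.bp Orc A x u))\<^sup>2)" by (simp add: sum_nonneg)
      thus "?p \<le> 1" using L.norm1[OF U, of A x] unfolding L.pg_def by linarith
    qed
    define t where "t = arcsin (sqrt ?p)"
    have sq: "0 \<le> sqrt ?p" "sqrt ?p \<le> 1" using p01 by auto
    have st: "sin t = sqrt ?p" unfolding t_def by (rule sin_arcsin) (use sq in linarith)+
    have ct: "cos t = sqrt (1 - ?p)"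
    proof -
      have "cos t = sqrt (1 - (sqrt ?p)\<^sup>2)" unfolding t_def by (rule cos_arcsin) (use sq in linarith)+
      thus ?thesis using p01 by simp
    qed
    have th: "?p = (sin t)\<^sup>2" "1 - ?p = (cos t)\<^sup>2" "0 \<le> sin t" "0 \<le> cos t"
      using st ct p01 by auto
    have t0: "0 \<le> t" unfolding t_def using sq by (intro arcsin_nonneg) auto
    define P where "P y = (Kf M (2 * t - 2 * pi * real y / real M) + Kf M (2 * t + 2 * pi * real y / real M)) / 2" for y
    have Py: "(\<Sum>u<d. (cmod (L.Vout Orc A E q0 y u))\<^sup>2) = P y" if "y < M" for y
      unfolding P_def by (rule L.prob_y[OF U xq that th])
    have meas: "meas_prob W out x b \<ge> (\<Sum>y\<in>{y. y < M \<and> (b = 1) = (y \<in> S)}. P y)" if b: "b < 2" for b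
    proof -
      have "(\<Sum>y\<in>{y. y < M \<and> (b = 1) = (y \<in> S)}. P y) = (\<Sum>y<M. if (b = 1) = (y \<in> S) then P y else 0)"
        by (simp add: sum.If_cases lessThan_def Collect_conj_eq Int_commute)
      also have "\<dots> = (\<Sum>y<M. \<Sum>u<d. (cmod (out $ (x * (2 * W) + 2 * (y * d + u) + b)))\<^sup>2)"
      proof (rule sum.cong)
        fix y assume "y \<in> {..<M}"
        hence y: "y < M" by simp
        have "(\<Sum>u<d. (cmod (out $ (x * (2 * W) + 2 * (y * d + u) + b)))\<^sup>2)
            = (\<Sum>u<d. if (b = 1) = (y \<in> S) then (cmod (L.Vout Orc A E q0 y u))\<^sup>2 else 0)"
        proof (rule sum.cong)
          fix u assume "u \<in> {..<d}"
          hence "u < d" by simp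
          from out_idx[OF this y b] show "(cmod (out $ (x * (2 * W) + 2 * (y * d + u) + b)))\<^sup>2
              = (if (b = 1) = (y \<in> S) then (cmod (L.Vout Orc A E q0 y u))\<^sup>2 else 0)" by simp
        qed simp
        also have "\<dots> = (if (b = 1) = (y \<in> S) then P y else 0)" using Py[OF y] by simp
        finally show "(if (b = 1) = (y \<in> S) then P y else 0) = (\<Sum>u<d. (cmod (out $ (x * (2 * W) + 2 * (y * d + u) + b)))\<^sup>2)" by simp
      qed simp
      also have "\<dots> \<le> (\<Sum>w<W. (cmod (out $ (x * (2 * W) + 2 * w + b)))\<^sup>2)"
        by (rule sum_grid[where g="\<lambda>w. (cmod (out $ (x * (2 * W) + 2 * w + b)))\<^sup>2"]) (auto simp: WE E_def)
      finally show ?thesis unfolding meas_prob_def .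
    qed
    have yvc: "\<bar>(sin (pi * real (yv M t n) / real M))\<^sup>2 - ?p\<bar> < \<epsilon> / 2"
      and zvc: "\<bar>(sin (pi * real (zv M t n) / real M))\<^sup>2 - ?p\<bar> < \<epsilon> / 2" if "n \<in> {-1,0,1,2::int}" for n
      using yv_close[OF L.Mpos that, of t] zv_close[OF L.Mpos that, of t] Mbig th(1) by auto
    show "let out = run_circ N Orc ?circ (unit_vec N (x * (2 * W))) in
            (outcome_prob a Orc x < \<tau> - \<epsilon> \<longrightarrow> meas_prob W out x 0 \<ge> 8 / pi\<^sup>2) \<and>
            (outcome_prob a Orc x \<ge> \<tau> \<longrightarrow> meas_prob W out x 1 \<ge> 8 / pi\<^sup>2)"
      unfolding Let_def out_def[symmetric] pdef
    proof (intro conjI impI)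
      assume lo: "?p < \<tau> - \<epsilon>"
      have "(\<Sum>y\<in>{y. y < M \<and> (0 = (1::nat)) = (y \<in> S)}. P y) \<ge> 8 / pi\<^sup>2"
        unfolding P_def
      proof (rule window[OF M4 t0])
        fix n :: int assume n: "n \<in> {-1,0,1,2}"
        show "yv M t n \<in> {y. y < M \<and> (0 = (1::nat)) = (y \<in> S)} \<and> zv M t n \<in> {y. y < M \<and> (0 = (1::nat)) = (y \<in> S)}"
        proof -
          have "(sin (pi * real (yv M t n) / real M))\<^sup>2 < \<tau> - \<epsilon> / 2" "(sin (pi * real (zv M t n) / real M))\<^sup>2 < \<tau> - \<epsilon> / 2"
            using yvc[OF n] zvc[OF n] lo unfolding abs_less_iff by linarith+
          thus ?thesis using yv_lt[OF L.Mpos] zv_lt[OF L.Mpos] unfolding S_def by auto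
        qed
      qed auto
      thus "meas_prob W out x 0 \<ge> 8 / pi\<^sup>2" using meas[of 0] by simp
    next
      assume hi: "?p \<ge> \<tau>"
      have "(\<Sum>y\<in>{y. y < M \<and> (1 = (1::nat)) = (y \<in> S)}. P y) \<ge> 8 / pi\<^sup>2"
        unfolding P_def
      proof (rule window[OF M4 t0])
        fix n :: int assume n: "n \<in> {-1,0,1,2}"
        show "yv M t n \<in> {y. y < M \<and> (1 = (1::nat)) = (y \<in> S)} \<and> zv M t n \<in> {y. y < M \<and> (1 = (1::nat)) = (y \<in> S)}"
        proof -
          have "(sin (pi * real (yv M t n) / real M))\<^sup>2 \<ge> \<tau> - \<epsilon> / 2" "(sin (pi * real (zv M t n) / real M))\<^sup>2 \<ge> \<tau> - \<epsilon> / 2"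
            using yvc[OF n] zvc[OF n] hi unfolding abs_less_iff by linarith+
          thus ?thesis using yv_lt[OF L.Mpos] zv_lt[OF L.Mpos] unfolding S_def by auto
        qed
      qed auto
      thus "meas_prob W out x 1 \<ge> 8 / pi\<^sup>2" using meas[of 1] by simp
    qed
  qed
  thus "let m = 2 ^ n0; r = n0 + a;
           l = nat \<lceil>log 2 (1 / \<epsilon>)\<rceil> + 8;
           W = 2 ^ (2 * l + r + 1);
           N = m * W * 2
       in \<exists>circ :: step list.
            list_all (step_ok N (2 ^ r)) circ \<and>
            real (num_queries circ) \<le> 1024 / \<epsilon> \<and>
            (\<forall>Orc. is_unitary (2 ^ r) Orc \<longrightarrow>
               (\<forall>x < m.
                  let out = run_circ N Orc circ (unit_vec N (x * (2 * W))) in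
                  (outcome_prob a Orc x < \<tau> - \<epsilon> \<longrightarrow> meas_prob W out x 0 \<ge> 8 / pi\<^sup>2) \<and>
                  (outcome_prob a Orc x \<ge> \<tau> \<longrightarrow> meas_prob W out x 1 \<ge> 8 / pi\<^sup>2)))"
    unfolding Let_def m_def[symmetric] r_def[symmetric] L_def[symmetric] l_def[symmetric]
      W_def[symmetric] N_def[symmetric] .
qed


end
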